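(* Let $G$ be a finite abelian group, $M$ a finitely generated $\mathbb Z[G]$-module, $H\subseteq G$ a subgroup and $s\ge0$. Then there is an isomorphism of $\mathbb Z[G/H]$-modules \[ \textstyle\bigcap^s_{\mathbb Z[G/H]}(M^{**})^H\xrightarrow{\ \sim\ }\big(\bigcap^s_{\mathbb Z[G]}M\big)^H \] whose base change to $\mathbb Q$ is the map $\nu_H:\mathbb Q\otimes\bigwedge^s_{\mathbb Z[G/H]}M^H\to\mathbb Q\otimes\bigwedge^s_{\mathbb Z[G]}M$ given by $x_1\wedge\cdots\wedge x_s\mapsto|H|^{1-s}x_1\wedge\cdots\wedge x_s$ for $s\ge1$ (equivalently, $\mathrm N_Ha_1\wedge\cdots\wedge\mathrm N_Ha_s\mapsto\mathrm N_H\cdot(a_1\wedge\cdots\wedge a_s)$) and by multiplication by $\mathrm N_H$ for $s=0$.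
   Context: For a commutative ring $R$ and $R$-module $N$, $N^*=\mathrm{Hom}_R(N,R)$ and the $s$-th exterior bidual is $\bigcap^s_RN=(\bigwedge^s_RN^* )^*$. Here $R=\mathbb Z[G]$ or $\mathbb Z[G/H]$; $(M^{**})^H$ is regarded as a $\mathbb Z[G/H]$-module. $\mathrm N_H=\sum_{h\in H}h$. After tensoring with $\mathbb Q$, $\mathbb Q\otimes\bigcap^s_RN$ is identified with $\bigwedge^s_{\mathbb Q\otimes R}(\mathbb Q\otimes N)$ (the group algebras being semisimple), and $\mathbb Q\otimes(M^{**})^H=(\mathbb Q\otimes M)^H$. *)

theory Defs
  imports "HOL-Algebra.Algebra" "HOL-Combinatorics.Permutations"
begin

definition group_ring :: "('g, 'z) monoid_scheme \<Rightarrow> ('g \<Rightarrow> int) ring" where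
  "group_ring G =
     \<lparr>carrier = {f. \<forall>x. x \<notin> carrier G \<longrightarrow> f x = 0},
      monoid.mult = (\<lambda>f k x. if x \<in> carrier G
                        then (\<Sum>y\<in>carrier G. f y * k (inv\<^bsub>G\<^esub> y \<otimes>\<^bsub>G\<^esub> x)) else 0),
      monoid.one = (\<lambda>x. if x = \<one>\<^bsub>G\<^esub> then 1 else 0),
      ring.zero = (\<lambda>x. 0),
      ring.add = (\<lambda>f k x. f x + k x)\<rparr>"

definition gr_elem :: "('g, 'z) monoid_scheme \<Rightarrow> 'g \<Rightarrow> ('g \<Rightarrow> int)" where
  "gr_elem G g = (\<lambda>x. if x = g \<and> g \<in> carrier G then 1 else 0)"

definition norm_elem :: "('g, 'z) monoid_scheme \<Rightarrow> 'g set \<Rightarrow> ('g \<Rightarrow> int)" where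
  "norm_elem G H = (\<lambda>x. if x \<in> H \<and> x \<in> carrier G then 1 else 0)"

definition linear_form :: "('r, 'a) ring_scheme \<Rightarrow> ('r, 'n, 'b) module_scheme \<Rightarrow> ('n \<Rightarrow> 'r) \<Rightarrow> bool" where
  "linear_form R N f \<longleftrightarrow>
     f \<in> carrier N \<rightarrow> carrier R \<and> f \<in> extensional (carrier N) \<and>
     (\<forall>x\<in>carrier N. \<forall>y\<in>carrier N. f (x \<oplus>\<^bsub>N\<^esub> y) = f x \<oplus>\<^bsub>R\<^esub> f y) \<and>
     (\<forall>r\<in>carrier R. \<forall>x\<in>carrier N. f (r \<odot>\<^bsub>N\<^esub> x) = r \<otimes>\<^bsub>R\<^esub> f x)"

definition dual :: "('r, 'a) ring_scheme \<Rightarrow> ('r, 'n, 'b) module_scheme \<Rightarrow> ('r, 'n \<Rightarrow> 'r) module" where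
  "dual R N =
     \<lparr>carrier = {f. linear_form R N f},
      monoid.mult = (\<lambda>f g. undefined), monoid.one = undefined,
      ring.zero = (\<lambda>x\<in>carrier N. \<zero>\<^bsub>R\<^esub>),
      ring.add = (\<lambda>f g. \<lambda>x\<in>carrier N. f x \<oplus>\<^bsub>R\<^esub> g x),
      module.smult = (\<lambda>r f. \<lambda>x\<in>carrier N. r \<otimes>\<^bsub>R\<^esub> f x)\<rparr>"

definition tuples :: "('d, 'b) partial_object_scheme \<Rightarrow> nat \<Rightarrow> 'd list set" where
  "tuples D s = {xs. length xs = s \<and> set xs \<subseteq> carrier D}"

definition alt_multilinear ::
  "('r, 'a) ring_scheme \<Rightarrow> ('r, 'd, 'b) module_scheme \<Rightarrow> nat \<Rightarrow> ('d list \<Rightarrow> 'r) \<Rightarrow> bool" where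
  "alt_multilinear R D s \<Phi> \<longleftrightarrow>
     \<Phi> \<in> tuples D s \<rightarrow> carrier R \<and> \<Phi> \<in> extensional (tuples D s) \<and>
     (\<forall>xs\<in>tuples D s. \<forall>i<s. \<forall>y\<in>carrier D.
        \<Phi> (xs[i := (xs!i) \<oplus>\<^bsub>D\<^esub> y]) = \<Phi> xs \<oplus>\<^bsub>R\<^esub> \<Phi> (xs[i := y])) \<and>
     (\<forall>xs\<in>tuples D s. \<forall>i<s. \<forall>r\<in>carrier R.
        \<Phi> (xs[i := r \<odot>\<^bsub>D\<^esub> (xs!i)]) = r \<otimes>\<^bsub>R\<^esub> \<Phi> xs) \<and>
     (\<forall>xs\<in>tuples D s. \<forall>i<s. \<forall>j<s. i \<noteq> j \<and> xs!i = xs!j \<longrightarrow> \<Phi> xs = \<zero>\<^bsub>R\<^esub>)"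

text \<open>The module Hom_R(\<And>^s_R D, R), realised (by the universal property of the
  exterior power) as the module of alternating R-multilinear maps D^s \<rightarrow> R.\<close>
definition alt_dual :: "('r, 'a) ring_scheme \<Rightarrow> ('r, 'd, 'b) module_scheme \<Rightarrow> nat \<Rightarrow> ('r, 'd list \<Rightarrow> 'r) module" where
  "alt_dual R D s =
     \<lparr>carrier = {\<Phi>. alt_multilinear R D s \<Phi>},
      monoid.mult = (\<lambda>f g. undefined), monoid.one = undefined,
      ring.zero = (\<lambda>xs\<in>tuples D s. \<zero>\<^bsub>R\<^esub>),
      ring.add = (\<lambda>f g. \<lambda>xs\<in>tuples D s. f xs \<oplus>\<^bsub>R\<^esub> g xs),
      module.smult = (\<lambda>r f. \<lambda>xs\<in>tuples D s. r \<otimes>\<^bsub>R\<^esub> f xs)\<rparr>"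

text \<open>Exterior bidual  \<Inter>^s_R N = (\<And>^s_R N^*)^*.\<close>
definition ext_bidual :: "('r, 'a) ring_scheme \<Rightarrow> ('r, 'n, 'b) module_scheme \<Rightarrow> nat \<Rightarrow> ('r, ('n \<Rightarrow> 'r) list \<Rightarrow> 'r) module" where
  "ext_bidual R N s = alt_dual R (dual R N) s"

definition ring_det :: "('r, 'a) ring_scheme \<Rightarrow> nat \<Rightarrow> (nat \<Rightarrow> nat \<Rightarrow> 'r) \<Rightarrow> 'r" where
  "ring_det R s m =
     (\<Oplus>\<^bsub>R\<^esub> \<sigma>\<in>{\<sigma>. \<sigma> permutes {..<s}}.
        [sign \<sigma>] \<cdot>\<^bsub>R\<^esub> (\<Otimes>\<^bsub>R\<^esub> i\<in>{..<s}. m i (\<sigma> i)))"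

definition wedge_to_bidual :: "('r, 'a) ring_scheme \<Rightarrow> ('r, 'n, 'b) module_scheme \<Rightarrow> 'n list \<Rightarrow> (('n \<Rightarrow> 'r) list \<Rightarrow> 'r)" where
  "wedge_to_bidual R N xs =
     (\<lambda>\<phi>s\<in>tuples (dual R N) (length xs). ring_det R (length xs) (\<lambda>i j. (\<phi>s!i) (xs!j)))"

definition eval_bidual :: "('r, 'a) ring_scheme \<Rightarrow> ('r, 'n, 'b) module_scheme \<Rightarrow> 'n \<Rightarrow> (('n \<Rightarrow> 'r) \<Rightarrow> 'r)" where
  "eval_bidual R N x = (\<lambda>\<phi>\<in>carrier (dual R N). \<phi> x)"

text \<open>Lift of an element of Z[G/H] to Z[G]: the coefficient of a coset is put on a
  fixed representative. On H-invariants this realises the Z[G/H]-action.\<close>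
definition quot_lift :: "('g, 'z) monoid_scheme \<Rightarrow> 'g set \<Rightarrow> ('g set \<Rightarrow> int) \<Rightarrow> ('g \<Rightarrow> int)" where
  "quot_lift G H f = (\<lambda>g. if g \<in> carrier G \<and> g = (SOME k. k \<in> H #>\<^bsub>G\<^esub> g)
                         then f (H #>\<^bsub>G\<^esub> g) else 0)"

definition invariants :: "('g, 'z) monoid_scheme \<Rightarrow> 'g set \<Rightarrow> ('g \<Rightarrow> int, 'n) module \<Rightarrow> ('g set \<Rightarrow> int, 'n) module" where
  "invariants G H N =
     \<lparr>carrier = {x \<in> carrier N. \<forall>h\<in>H. gr_elem G h \<odot>\<^bsub>N\<^esub> x = x},
      monoid.mult = monoid.mult N, monoid.one = monoid.one N, ring.zero = ring.zero N, ring.add = ring.add N,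
      module.smult = (\<lambda>f x. quot_lift G H f \<odot>\<^bsub>N\<^esub> x)\<rparr>"

definition fin_gen :: "('r, 'a) ring_scheme \<Rightarrow> ('r, 'n, 'b) module_scheme \<Rightarrow> bool" where
  "fin_gen R M \<longleftrightarrow> (\<exists>A. finite A \<and> A \<subseteq> carrier M \<and>
      (\<forall>x\<in>carrier M. \<exists>c. c \<in> A \<rightarrow> carrier R \<and> x = (\<Oplus>\<^bsub>M\<^esub> a\<in>A. c a \<odot>\<^bsub>M\<^esub> a)))"

definition module_iso :: "('r, 'a) ring_scheme \<Rightarrow> ('r, 'm, 'b) module_scheme \<Rightarrow> ('r, 'n, 'c) module_scheme \<Rightarrow> ('m \<Rightarrow> 'n) \<Rightarrow> bool" where
  "module_iso R A B \<Phi> \<longleftrightarrow>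
     bij_betw \<Phi> (carrier A) (carrier B) \<and>
     (\<forall>x\<in>carrier A. \<forall>y\<in>carrier A. \<Phi> (x \<oplus>\<^bsub>A\<^esub> y) = \<Phi> x \<oplus>\<^bsub>B\<^esub> \<Phi> y) \<and>
     (\<forall>r\<in>carrier R. \<forall>x\<in>carrier A. \<Phi> (r \<odot>\<^bsub>A\<^esub> x) = r \<odot>\<^bsub>B\<^esub> \<Phi> x)"

end

theory Submission
  imports Defs "HOL-Library.Function_Algebras"
begin

lemma gr_carrier: "f \<in> carrier (group_ring G) \<longleftrightarrow> (\<forall>x. x \<notin> carrier G \<longrightarrow> f x = 0)"
  by (simp add: group_ring_def)
lemma gr_add: "f \<oplus>\<^bsub>group_ring G\<^esub> k = (\<lambda>x. f x + k x)"
  by (simp add: group_ring_def)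
lemma gr_mult: "f \<otimes>\<^bsub>group_ring G\<^esub> k = (\<lambda>x. if x \<in> carrier G
                        then (\<Sum>y\<in>carrier G. f y * k (inv\<^bsub>G\<^esub> y \<otimes>\<^bsub>G\<^esub> x)) else 0)"
  by (simp add: group_ring_def)
lemma gr_zero: "\<zero>\<^bsub>group_ring G\<^esub> = (\<lambda>x. 0)"
  by (simp add: group_ring_def)
lemma gr_one: "\<one>\<^bsub>group_ring G\<^esub> = (\<lambda>x. if x = \<one>\<^bsub>G\<^esub> then 1 else 0)"
  by (simp add: group_ring_def)

lemma (in group) sum_transl:
  assumes "y \<in> carrier G"
  shows "(\<Sum>w\<in>carrier G. F w) = (\<Sum>z\<in>carrier G. F (y \<otimes> z))"
  by (rule sum.reindex_bij_witness[where j="\<lambda>w. inv y \<otimes> w" and i="\<lambda>z. y \<otimes> z"])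
     (auto simp: assms m_assoc[symmetric])

lemma (in comm_group) cg_a: "x \<in> carrier G \<Longrightarrow> y \<in> carrier G \<Longrightarrow> x \<otimes> inv (inv y \<otimes> x) = y"
  by (simp add: inv_mult_group m_assoc[symmetric])
lemma (in comm_group) cg_b: "x \<in> carrier G \<Longrightarrow> y \<in> carrier G \<Longrightarrow> inv (x \<otimes> inv y) \<otimes> x = y"
  by (simp add: inv_mult_group m_assoc)
lemma (in comm_group) cg_c: "x \<in> carrier G \<Longrightarrow> y \<in> carrier G \<Longrightarrow> inv (inv y \<otimes> x) \<otimes> x = y"
  by (simp add: inv_mult_group m_assoc m_lcomm)

lemma (in group) g_hlp1: "y \<in> carrier G \<Longrightarrow> z \<in> carrier G \<Longrightarrow> inv y \<otimes> (y \<otimes> z) = z"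
  by (simp add: m_assoc[symmetric])
lemma (in group) g_hlp2: "y \<in> carrier G \<Longrightarrow> z \<in> carrier G \<Longrightarrow> x \<in> carrier G \<Longrightarrow> inv (y \<otimes> z) \<otimes> x = inv z \<otimes> (inv y \<otimes> x)"
  by (simp add: m_assoc inv_mult_group)

lemma (in comm_group) gr_cring:
  assumes fin: "finite (carrier G)"
  shows "cring (group_ring G)"
proof (rule cringI)
  show "abelian_group (group_ring G)"
    apply (rule abelian_groupI)
    apply (auto simp: gr_carrier gr_add gr_zero)
    apply (rule_tac x="\<lambda>z. - x z" in bexI) apply (auto simp: gr_carrier) done
next
  show "comm_monoid (group_ring G)"
  proof (rule comm_monoidI)
    show "\<one>\<^bsub>group_ring G\<^esub> \<in> carrier (group_ring G)" by (simp add: gr_carrier gr_one)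
  next
    fix f g h assume f: "f \<in> carrier (group_ring G)" and g: "g \<in> carrier (group_ring G)"
      and h: "h \<in> carrier (group_ring G)"
    show "f \<otimes>\<^bsub>group_ring G\<^esub> g \<in> carrier (group_ring G)" by (simp add: gr_carrier gr_mult)
    show "(f \<otimes>\<^bsub>group_ring G\<^esub> g) \<otimes>\<^bsub>group_ring G\<^esub> h = f \<otimes>\<^bsub>group_ring G\<^esub> (g \<otimes>\<^bsub>group_ring G\<^esub> h)"
    proof
      fix x show "((f \<otimes>\<^bsub>group_ring G\<^esub> g) \<otimes>\<^bsub>group_ring G\<^esub> h) x = (f \<otimes>\<^bsub>group_ring G\<^esub> (g \<otimes>\<^bsub>group_ring G\<^esub> h)) x"
      proof (cases "x \<in> carrier G")
        case True
        have "((f \<otimes>\<^bsub>group_ring G\<^esub> g) \<otimes>\<^bsub>group_ring G\<^esub> h) x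
          = (\<Sum>w\<in>carrier G. (\<Sum>y\<in>carrier G. f y * g (inv y \<otimes> w)) * h (inv w \<otimes> x))"
          using True by (simp add: gr_mult)
        also have "\<dots> = (\<Sum>y\<in>carrier G. \<Sum>w\<in>carrier G. f y * g (inv y \<otimes> w) * h (inv w \<otimes> x))"
          by (simp add: sum_distrib_right, rule sum.swap)
        also have "\<dots> = (\<Sum>y\<in>carrier G. \<Sum>z\<in>carrier G. f y * g (inv y \<otimes> (y \<otimes> z)) * h (inv (y \<otimes> z) \<otimes> x))"
          by (intro sum.cong refl sum_transl)
        also have "\<dots> = (\<Sum>y\<in>carrier G. f y * (\<Sum>z\<in>carrier G. g z * h (inv z \<otimes> (inv y \<otimes> x))))"
          by (intro sum.cong refl) (simp add: sum_distrib_left mult.assoc g_hlp1 g_hlp2 True)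
        also have "\<dots> = (f \<otimes>\<^bsub>group_ring G\<^esub> (g \<otimes>\<^bsub>group_ring G\<^esub> h)) x"
          using True by (simp add: gr_mult)
        finally show ?thesis .
      qed (simp add: gr_mult)
    qed
    show "f \<otimes>\<^bsub>group_ring G\<^esub> g = g \<otimes>\<^bsub>group_ring G\<^esub> f"
    proof
      fix x show "(f \<otimes>\<^bsub>group_ring G\<^esub> g) x = (g \<otimes>\<^bsub>group_ring G\<^esub> f) x"
      proof (cases "x \<in> carrier G")
        case True
        have "(\<Sum>y\<in>carrier G. f y * g (inv y \<otimes> x)) = (\<Sum>z\<in>carrier G. g z * f (inv z \<otimes> x))"
          by (rule sum.reindex_bij_witness[where i="\<lambda>z. x \<otimes> inv z" and j="\<lambda>y. inv y \<otimes> x"])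
            (simp_all add: True cg_a cg_b cg_c)
        then show ?thesis using True by (simp add: gr_mult)
      qed (simp add: gr_mult)
    qed
    show "\<one>\<^bsub>group_ring G\<^esub> \<otimes>\<^bsub>group_ring G\<^esub> f = f"
    proof
      fix x show "(\<one>\<^bsub>group_ring G\<^esub> \<otimes>\<^bsub>group_ring G\<^esub> f) x = f x"
      proof (cases "x \<in> carrier G")
        case True
        have "(\<Sum>y\<in>carrier G. (if y = \<one> then 1 else 0) * f (inv y \<otimes> x)) = f (inv \<one> \<otimes> x)"
          by (subst sum.cong[OF refl, where h="\<lambda>y. if y = \<one> then f (inv y \<otimes> x) else 0"]) (auto simp: fin)
        then show ?thesis using True by (simp add: gr_mult gr_one)
      qed (use f in \<open>simp add: gr_mult gr_carrier\<close>)
    qed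
  qed
next
  fix f g h assume "f \<in> carrier (group_ring G)" "g \<in> carrier (group_ring G)" "h \<in> carrier (group_ring G)"
  show "(f \<oplus>\<^bsub>group_ring G\<^esub> g) \<otimes>\<^bsub>group_ring G\<^esub> h = f \<otimes>\<^bsub>group_ring G\<^esub> h \<oplus>\<^bsub>group_ring G\<^esub> g \<otimes>\<^bsub>group_ring G\<^esub> h"
    by (auto simp: gr_mult gr_add distrib_right sum.distrib)
qed

definition rep :: "'g set \<Rightarrow> 'g" where "rep C = (SOME k. k \<in> C)"
definition iota :: "('g,'z) monoid_scheme \<Rightarrow> 'g set \<Rightarrow> ('g set \<Rightarrow> int) \<Rightarrow> ('g \<Rightarrow> int)" where
  "iota G H f = (\<lambda>g. if g \<in> carrier G then f (H #>\<^bsub>G\<^esub> g) else 0)"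
definition kappa :: "('g,'z) monoid_scheme \<Rightarrow> 'g set \<Rightarrow> ('g \<Rightarrow> int) \<Rightarrow> ('g set \<Rightarrow> int)" where
  "kappa G H a = (\<lambda>C. if C \<in> rcosets\<^bsub>G\<^esub> H then a (rep C) else 0)"
definition proj :: "('g,'z) monoid_scheme \<Rightarrow> 'g set \<Rightarrow> ('g \<Rightarrow> int) \<Rightarrow> ('g set \<Rightarrow> int)" where
  "proj G H r = (\<lambda>C. if C \<in> rcosets\<^bsub>G\<^esub> H then (\<Sum>g\<in>C. r g) else 0)"
definition scal :: "int \<Rightarrow> ('a \<Rightarrow> int) \<Rightarrow> ('a \<Rightarrow> int)" where
  "scal m a = (\<lambda>x. m * a x)"
definition hinv :: "('g,'z) monoid_scheme \<Rightarrow> 'g set \<Rightarrow> ('g \<Rightarrow> int) \<Rightarrow> bool" where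
  "hinv G H a \<longleftrightarrow> a \<in> carrier (group_ring G) \<and> (\<forall>h\<in>H. gr_elem G h \<otimes>\<^bsub>group_ring G\<^esub> a = a)"

lemma scal_mult_left: "scal m a \<otimes>\<^bsub>group_ring G\<^esub> b = scal m (a \<otimes>\<^bsub>group_ring G\<^esub> b)"
  by (auto simp: scal_def gr_mult sum_distrib_left mult.assoc)
lemma scal_mult_right: "a \<otimes>\<^bsub>group_ring G\<^esub> scal m b = scal m (a \<otimes>\<^bsub>group_ring G\<^esub> b)"
  by (auto simp: scal_def gr_mult sum_distrib_left mult.assoc mult.left_commute)
lemma scal_carrier: "a \<in> carrier (group_ring G) \<Longrightarrow> scal m a \<in> carrier (group_ring G)"
  by (simp add: scal_def gr_carrier)
lemma scal_scal: "scal m (scal n a) = scal (m * n) a"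
  by (simp add: scal_def mult.assoc)
lemma scal_inj: "m \<noteq> 0 \<Longrightarrow> scal m a = scal m b \<Longrightarrow> a = b"
  by (auto simp: scal_def fun_eq_iff)
lemma scal_add: "scal m a \<oplus>\<^bsub>group_ring G\<^esub> scal m b = scal m (a \<oplus>\<^bsub>group_ring G\<^esub> b)"
  by (simp add: scal_def gr_add distrib_left)
lemma scal_1: "scal 1 a = a" by (simp add: scal_def)

locale gsetup = comm_group G for G :: "('g,'z) monoid_scheme" (structure) +
  fixes H :: "'g set"
  assumes finG: "finite (carrier G)" and subH: "subgroup H G"
begin

abbreviation "R \<equiv> group_ring G"
abbreviation "S \<equiv> group_ring (G Mod H)"
abbreviation "N \<equiv> norm_elem G H"
abbreviation "q \<equiv> quot_lift G H"
abbreviation "\<iota> \<equiv> iota G H"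
abbreviation "\<kappa> \<equiv> kappa G H"
abbreviation "\<pi> \<equiv> proj G H"

lemma HG: "H \<subseteq> carrier G" using subH subgroup.subset by blast
lemma finH: "finite H" using HG finG finite_subset by blast
lemma normH: "H \<lhd> G" using subH normal_iff_subgroup by blast
lemma cardH: "card H > 0" using finH subgroup.one_closed[OF subH] card_gt_0_iff by blast

lemma carrier_Mod: "carrier (G Mod H) = rcosets H" by (simp add: FactGroup_def)
lemma rc_in: "g \<in> carrier G \<Longrightarrow> H #> g \<in> rcosets H" using HG rcosetsI by blast
lemma rc_self: "g \<in> carrier G \<Longrightarrow> g \<in> H #> g" using subH rcos_self by blast
lemma rc_eq: "g \<in> carrier G \<Longrightarrow> k \<in> H #> g \<Longrightarrow> H #> k = H #> g"
  using repr_independence subH by metis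
lemma rcosets_sub: "C \<in> rcosets H \<Longrightarrow> C \<subseteq> carrier G"
  using subgroup.rcosets_carrier[OF subH is_group] by blast
lemma rc_nonempty: "C \<in> rcosets H \<Longrightarrow> \<exists>g\<in>carrier G. C = H #> g"
  by (auto simp: RCOSETS_def)
lemma rep_in: "C \<in> rcosets H \<Longrightarrow> rep C \<in> C"
  unfolding rep_def by (metis rc_nonempty rc_self someI)
lemma rep_G: "C \<in> rcosets H \<Longrightarrow> rep C \<in> carrier G"
  using rep_in rcosets_sub by blast
lemma rep_rc: "C \<in> rcosets H \<Longrightarrow> H #> rep C = C"
  by (metis rc_eq rc_nonempty rep_in)
lemma rc_mem_eq: "C \<in> rcosets H \<Longrightarrow> y \<in> C \<Longrightarrow> H #> y = C"
  by (metis rc_eq rc_nonempty)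
lemma q_alt: "q f = (\<lambda>g. if g \<in> carrier G \<and> g = rep (H #> g) then f (H #> g) else 0)"
  by (simp add: quot_lift_def rep_def)
lemma q_coset: "C \<in> rcosets H \<Longrightarrow> y \<in> C \<Longrightarrow> q f y = (if y = rep C then f C else 0)"
proof -
  assume C: "C \<in> rcosets H" and y: "y \<in> C"
  have yG: "y \<in> carrier G" using C y rcosets_sub by blast
  have "H #> y = C" using C y rc_mem_eq by blast
  then show ?thesis by (auto simp: q_alt yG)
qed
lemma q_carrier: "q f \<in> carrier R"
  by (simp add: gr_carrier q_alt)

lemma finite_rcosets: "finite (rcosets H)"
  by (rule finite_subset[of _ "Pow (carrier G)"]) (auto dest: rcosets_sub simp: finG)

lemma sum_part: "(\<Sum>y\<in>carrier G. F y) = (\<Sum>C\<in>rcosets H. \<Sum>y\<in>C. F y)"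
proof -
  have "(\<Sum>y\<in>\<Union>(rcosets H). F y) = (\<Sum>C\<in>rcosets H. \<Sum>y\<in>C. F y)"
    apply (subst sum.Union_disjoint)
    using finG rcosets_sub finite_subset apply blast
    using rcos_disjoint[OF subH] apply (simp add: pairwise_def disjnt_def)
    by simp
  then show ?thesis using rcosets_part_G[OF subH] by simp
qed

lemma sum_Hx:
  assumes x: "x \<in> carrier G"
  shows "(\<Sum>y\<in>H. F (inv y \<otimes> x)) = (\<Sum>k\<in>H #> x. F k)"
proof (rule sum.reindex_bij_witness[where i="\<lambda>k. inv (k \<otimes> inv x)" and j="\<lambda>y. inv y \<otimes> x"])
  fix y assume y: "y \<in> H"
  have yG: "y \<in> carrier G" by (rule subsetD[OF HG y])
  show "inv (inv y \<otimes> x \<otimes> inv x) = y" using x yG by (simp add: m_assoc)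
  have "inv y \<in> H" by (rule subgroup.m_inv_closed[OF subH y])
  then show "inv y \<otimes> x \<in> H #> x" by (rule rcosI[OF _ HG x])
  show "F (inv y \<otimes> x) = F (inv y \<otimes> x)" ..
next
  fix k assume k: "k \<in> H #> x"
  have kG: "k \<in> carrier G" using k r_coset_subset_G[OF HG x] by (rule subsetD[rotated])
  show "inv (inv (k \<otimes> inv x)) \<otimes> x = k" using x kG by (simp add: m_assoc)
  have "k \<otimes> inv x \<in> H" by (rule subgroup.rcos_module_imp[OF subH is_group x k])
  then show "inv (k \<otimes> inv x) \<in> H" by (rule subgroup.m_inv_closed[OF subH])
qed

lemma sum_rep: "C \<in> rcosets H \<Longrightarrow> (\<Sum>y\<in>C. q f y * T y) = f C * T (rep C)"
proof -
  assume C: "C \<in> rcosets H"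
  have fin: "finite C" using C rcosets_sub finG finite_subset by blast
  have "(\<Sum>y\<in>C. q f y * T y) = (\<Sum>y\<in>C. if y = rep C then f C * T y else 0)"
    by (rule sum.cong) (auto simp: q_coset[OF C])
  also have "\<dots> = f C * T (rep C)" using fin rep_in[OF C] by simp
  finally show ?thesis .
qed

lemma sum_q: "(\<Sum>y\<in>carrier G. q f y * T y) = (\<Sum>C\<in>rcosets H. f C * T (rep C))"
  by (simp add: sum_part sum_rep)

lemma gr_elem_mult: "u \<in> carrier G \<Longrightarrow>
   gr_elem G u \<otimes>\<^bsub>R\<^esub> a = (\<lambda>x. if x \<in> carrier G then a (inv u \<otimes> x) else 0)"
proof
  fix x assume u: "u \<in> carrier G"
  have "(\<Sum>y\<in>carrier G. gr_elem G u y * a (inv y \<otimes> x)) = (\<Sum>y\<in>carrier G. if y = u then a (inv y \<otimes> x) else 0)"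
    by (rule sum.cong) (auto simp: gr_elem_def)
  also have "\<dots> = a (inv u \<otimes> x)" using u finG by simp
  finally show "(gr_elem G u \<otimes>\<^bsub>R\<^esub> a) x = (if x \<in> carrier G then a (inv u \<otimes> x) else 0)"
    by (simp add: gr_mult)
qed

lemma norm_mult: "N \<otimes>\<^bsub>R\<^esub> a = (\<lambda>x. if x \<in> carrier G then (\<Sum>y\<in>H. a (inv y \<otimes> x)) else 0)"
proof
  fix x
  have "(\<Sum>y\<in>carrier G. N y * a (inv y \<otimes> x)) = (\<Sum>y\<in>carrier G. if y \<in> H then a (inv y \<otimes> x) else 0)"
    by (rule sum.cong) (auto simp: norm_elem_def)
  also have "\<dots> = (\<Sum>y\<in>H. a (inv y \<otimes> x))"
  proof -
    have "carrier G \<inter> H = H" using HG by blast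
    then show ?thesis by (simp only: sum.inter_restrict[OF finG, symmetric])
  qed
  finally show "(N \<otimes>\<^bsub>R\<^esub> a) x = (if x \<in> carrier G then (\<Sum>y\<in>H. a (inv y \<otimes> x)) else 0)"
    by (simp add: gr_mult)
qed

lemma hinv_iff: "hinv G H a \<longleftrightarrow> a \<in> carrier R \<and> (\<forall>h\<in>H. \<forall>x\<in>carrier G. a (inv h \<otimes> x) = a x)"
proof -
  have "\<And>h. h \<in> H \<Longrightarrow> a \<in> carrier R \<Longrightarrow> (gr_elem G h \<otimes>\<^bsub>R\<^esub> a = a) \<longleftrightarrow> (\<forall>x\<in>carrier G. a (inv h \<otimes> x) = a x)"
  proof -
    fix h assume h: "h \<in> H" and a: "a \<in> carrier R"
    have hG: "h \<in> carrier G" by (rule subsetD[OF HG h])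
    have az: "\<And>x. x \<notin> carrier G \<Longrightarrow> a x = 0" using a by (simp add: gr_carrier)
    show "(gr_elem G h \<otimes>\<^bsub>R\<^esub> a = a) \<longleftrightarrow> (\<forall>x\<in>carrier G. a (inv h \<otimes> x) = a x)"
      unfolding gr_elem_mult[OF hG]
    proof
      assume L: "(\<lambda>x. if x \<in> carrier G then a (inv h \<otimes> x) else 0) = a"
      show "\<forall>x\<in>carrier G. a (inv h \<otimes> x) = a x"
      proof
        fix x assume x: "x \<in> carrier G"
        show "a (inv h \<otimes> x) = a x" using fun_cong[OF L, of x] x by simp
      qed
    next
      assume L: "\<forall>x\<in>carrier G. a (inv h \<otimes> x) = a x"
      show "(\<lambda>x. if x \<in> carrier G then a (inv h \<otimes> x) else 0) = a"
      proof
        fix x show "(if x \<in> carrier G then a (inv h \<otimes> x) else 0) = a x"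
          using L az by (cases "x \<in> carrier G") simp_all
      qed
    qed
  qed
  note eq = this
  show ?thesis
  proof
    assume "hinv G H a" then show "a \<in> carrier R \<and> (\<forall>h\<in>H. \<forall>x\<in>carrier G. a (inv h \<otimes> x) = a x)"
      using eq unfolding hinv_def by simp
  next
    assume "a \<in> carrier R \<and> (\<forall>h\<in>H. \<forall>x\<in>carrier G. a (inv h \<otimes> x) = a x)"
    then show "hinv G H a" using eq unfolding hinv_def by simp
  qed
qed

lemma hinv_const: "hinv G H a \<Longrightarrow> x \<in> carrier G \<Longrightarrow> k \<in> H #> x \<Longrightarrow> a k = a x"
proof -
  assume a: "hinv G H a" and x: "x \<in> carrier G" and k: "k \<in> H #> x"
  obtain h where h: "h \<in> H" "k = h \<otimes> x" using k unfolding r_coset_def by blast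
  have ih: "inv h \<in> H" by (rule subgroup.m_inv_closed[OF subH h(1)])
  have hG: "h \<in> carrier G" by (rule subsetD[OF HG h(1)])
  have all: "\<forall>h\<in>H. \<forall>x\<in>carrier G. a (inv h \<otimes> x) = a x" using hinv_iff[THEN iffD1, OF a] by (rule conjunct2)
  have "\<forall>x\<in>carrier G. a (inv (inv h) \<otimes> x) = a x" using all ih by (rule bspec)
  then have "a (inv (inv h) \<otimes> x) = a x" using x by (rule bspec)
  then show ?thesis using h(2) inv_inv[OF hG] by simp
qed

lemma N_q: "N \<otimes>\<^bsub>R\<^esub> q f = \<iota> f"
proof
  fix x
  show "(N \<otimes>\<^bsub>R\<^esub> q f) x = \<iota> f x"
  proof (cases "x \<in> carrier G")
    case True
    have "(\<Sum>y\<in>H. q f (inv y \<otimes> x)) = (\<Sum>k\<in>H #> x. q f k * 1)" using True by (simp add: sum_Hx)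
    also have "\<dots> = f (H #> x)" using sum_rep[OF rc_in[OF True], of f "\<lambda>_. 1"] by simp
    finally show ?thesis using True by (simp add: norm_mult iota_def)
  qed (simp add: norm_mult iota_def)
qed

lemma N_hinv: "hinv G H a \<Longrightarrow> N \<otimes>\<^bsub>R\<^esub> a = scal (int (card H)) a"
proof
  fix x assume a: "hinv G H a"
  show "(N \<otimes>\<^bsub>R\<^esub> a) x = scal (int (card H)) a x"
  proof (cases "x \<in> carrier G")
    case True
    have "(\<Sum>y\<in>H. a (inv y \<otimes> x)) = (\<Sum>y\<in>H. a x)" using a True by (simp add: hinv_iff)
    then show ?thesis using True by (simp add: norm_mult scal_def)
  next
    case False then show ?thesis using a by (simp add: norm_mult scal_def hinv_def gr_carrier)
  qed
qed

lemma N_proj: "N \<otimes>\<^bsub>R\<^esub> r = \<iota> (\<pi> r)"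
proof
  fix x show "(N \<otimes>\<^bsub>R\<^esub> r) x = \<iota> (\<pi> r) x"
    by (cases "x \<in> carrier G") (simp_all add: norm_mult iota_def proj_def sum_Hx rc_in)
qed

lemma iota_carrier: "\<iota> f \<in> carrier R" by (simp add: gr_carrier iota_def)
lemma kappa_carrier: "\<kappa> a \<in> carrier S" by (simp add: gr_carrier kappa_def carrier_Mod)
lemma proj_carrier: "\<pi> r \<in> carrier S" by (simp add: gr_carrier proj_def carrier_Mod)
lemma N_carrier: "N \<in> carrier R" by (simp add: gr_carrier norm_elem_def)

lemma iota_hinv: "hinv G H (\<iota> f)"
  unfolding hinv_iff
proof (intro conjI ballI iota_carrier)
  fix h x assume h: "h \<in> H" and x: "x \<in> carrier G"
  have ih: "inv h \<in> H" by (rule subgroup.m_inv_closed[OF subH h])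
  have ihG: "inv h \<in> carrier G" by (rule subsetD[OF HG ih])
  have "inv h \<otimes> x \<in> H #> x" by (rule rcosI[OF ih HG x])
  then have "H #> (inv h \<otimes> x) = H #> x" by (rule rc_eq[OF x])
  then show "\<iota> f (inv h \<otimes> x) = \<iota> f x" using x ihG by (simp add: iota_def)
qed

lemma iota_kappa: "hinv G H a \<Longrightarrow> \<iota> (\<kappa> a) = a"
proof
  fix x assume a: "hinv G H a"
  show "\<iota> (\<kappa> a) x = a x"
  proof (cases "x \<in> carrier G")
    case True
    have "rep (H #> x) \<in> H #> x" by (rule rep_in[OF rc_in[OF True]])
    then show ?thesis using True a hinv_const rc_in by (simp add: iota_def kappa_def)
  next
    case False then show ?thesis using a by (simp add: iota_def hinv_def gr_carrier)
  qed
qed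

lemma kappa_iota: "f \<in> carrier S \<Longrightarrow> \<kappa> (\<iota> f) = f"
proof
  fix C assume f: "f \<in> carrier S"
  show "\<kappa> (\<iota> f) C = f C"
    using f rep_G rep_rc by (auto simp: iota_def kappa_def gr_carrier carrier_Mod)
qed

lemma iota_inj: "f \<in> carrier S \<Longrightarrow> f' \<in> carrier S \<Longrightarrow> \<iota> f = \<iota> f' \<Longrightarrow> f = f'"
  by (metis kappa_iota)

lemma iota_add: "\<iota> (f \<oplus>\<^bsub>S\<^esub> f') = \<iota> f \<oplus>\<^bsub>R\<^esub> \<iota> f'"
  by (auto simp: iota_def gr_add)
lemma iota_zero: "\<iota> \<zero>\<^bsub>S\<^esub> = \<zero>\<^bsub>R\<^esub>"
  by (auto simp: iota_def gr_zero)
lemma kappa_add: "\<kappa> (a \<oplus>\<^bsub>R\<^esub> a') = \<kappa> a \<oplus>\<^bsub>S\<^esub> \<kappa> a'"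
  by (auto simp: kappa_def gr_add)
lemma kappa_zero: "\<kappa> \<zero>\<^bsub>R\<^esub> = \<zero>\<^bsub>S\<^esub>"
  by (auto simp: kappa_def gr_zero)
lemma iota_scal: "\<iota> (scal m f) = scal m (\<iota> f)"
  by (auto simp: iota_def scal_def)
lemma kappa_scal: "\<kappa> (scal m a) = scal m (\<kappa> a)"
  by (auto simp: kappa_def scal_def)

lemma Mod_comm_group: "comm_group (G Mod H)"
  using abelian_FactGroup[OF subH] .
lemma S_cring: "cring S"
  using comm_group.gr_cring[OF Mod_comm_group] finite_rcosets by (simp add: carrier_Mod)
lemma R_cring: "cring R"
  using gr_cring finG .

lemma q_iota: "q f \<otimes>\<^bsub>R\<^esub> \<iota> f' = \<iota> (f \<otimes>\<^bsub>S\<^esub> f')"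
proof
  fix x
  show "(q f \<otimes>\<^bsub>R\<^esub> \<iota> f') x = \<iota> (f \<otimes>\<^bsub>S\<^esub> f') x"
  proof (cases "x \<in> carrier G")
    case True
    have "(q f \<otimes>\<^bsub>R\<^esub> \<iota> f') x = (\<Sum>y\<in>carrier G. q f y * \<iota> f' (inv y \<otimes> x))"
      using True by (simp add: gr_mult)
    also have "\<dots> = (\<Sum>C\<in>rcosets H. f C * \<iota> f' (inv (rep C) \<otimes> x))" by (rule sum_q)
    also have "\<dots> = (\<Sum>C\<in>rcosets H. f C * f' (inv\<^bsub>G Mod H\<^esub> C \<otimes>\<^bsub>G Mod H\<^esub> (H #> x)))"
    proof (rule sum.cong[OF refl])
      fix C assume C: "C \<in> rcosets H"
      have "inv\<^bsub>G Mod H\<^esub> C \<otimes>\<^bsub>G Mod H\<^esub> (H #> x) = set_inv C <#> (H #> x)"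
        using normal.inv_FactGroup[OF normH] C by (simp add: carrier_Mod)
      also have "\<dots> = H #> (inv (rep C) \<otimes> x)"
        using rep_rc[OF C] rep_G[OF C] True normal.rcos_inv[OF normH] normal.rcos_sum[OF normH]
        by (metis inv_closed)
      finally show "f C * \<iota> f' (inv (rep C) \<otimes> x) = f C * f' (inv\<^bsub>G Mod H\<^esub> C \<otimes>\<^bsub>G Mod H\<^esub> (H #> x))"
        using True rep_G[OF C] by (simp add: iota_def)
    qed
    also have "\<dots> = \<iota> (f \<otimes>\<^bsub>S\<^esub> f') x"
      using True rc_in by (simp add: iota_def gr_mult carrier_Mod)
    finally show ?thesis .
  qed (simp add: gr_mult iota_def)
qed

lemma S_one: "\<one>\<^bsub>S\<^esub> = (\<lambda>C. if C = H then 1 else 0)"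
  by (simp add: gr_one)
lemma iota_one: "\<iota> \<one>\<^bsub>S\<^esub> = N"
proof
  fix x show "\<iota> \<one>\<^bsub>S\<^esub> x = N x"
  proof (cases "x \<in> carrier G")
    case True
    have "H #> x = H \<longleftrightarrow> x \<in> H"
    proof
      assume "H #> x = H" then show "x \<in> H" using rc_self[OF True] by simp
    next
      assume "x \<in> H" then show "H #> x = H" by (rule coset_join2[OF True subH])
    qed
    then show ?thesis using True by (simp add: S_one iota_def norm_elem_def)
  next
    case False then show ?thesis by (simp add: iota_def norm_elem_def)
  qed
qed

lemma proj_iota: "r \<in> carrier R \<Longrightarrow> f \<in> carrier S \<Longrightarrow> \<iota> (\<pi> r \<otimes>\<^bsub>S\<^esub> f) = r \<otimes>\<^bsub>R\<^esub> \<iota> f"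
proof -
  assume r: "r \<in> carrier R" and f: "f \<in> carrier S"
  interpret Rc: cring R by (rule R_cring)
  interpret Sc: cring S by (rule S_cring)
  have "r \<otimes>\<^bsub>R\<^esub> \<iota> f = r \<otimes>\<^bsub>R\<^esub> (N \<otimes>\<^bsub>R\<^esub> q f)" by (simp add: N_q)
  also have "\<dots> = (N \<otimes>\<^bsub>R\<^esub> r) \<otimes>\<^bsub>R\<^esub> q f"
    using r N_carrier q_carrier by (simp add: Rc.m_ac)
  also have "\<dots> = q f \<otimes>\<^bsub>R\<^esub> \<iota> (\<pi> r)"
    using r N_carrier q_carrier by (simp add: N_proj Rc.m_comm iota_carrier)
  also have "\<dots> = \<iota> (f \<otimes>\<^bsub>S\<^esub> \<pi> r)" by (rule q_iota)
  also have "\<dots> = \<iota> (\<pi> r \<otimes>\<^bsub>S\<^esub> f)" using f proj_carrier by (simp add: Sc.m_comm)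
  finally show ?thesis by simp
qed

lemma r_hinv: "r \<in> carrier R \<Longrightarrow> hinv G H a \<Longrightarrow> r \<otimes>\<^bsub>R\<^esub> a = q (\<pi> r) \<otimes>\<^bsub>R\<^esub> a"
  by (metis iota_kappa kappa_carrier proj_iota q_iota)

lemma kappa_q: "hinv G H a \<Longrightarrow> \<kappa> (q f \<otimes>\<^bsub>R\<^esub> a) = f \<otimes>\<^bsub>S\<^esub> \<kappa> a"
proof -
  assume a: "hinv G H a"
  have "q f \<otimes>\<^bsub>R\<^esub> a = \<iota> (f \<otimes>\<^bsub>S\<^esub> \<kappa> a)" by (metis a iota_kappa q_iota)
  moreover have "f \<otimes>\<^bsub>S\<^esub> \<kappa> a \<in> carrier S" by (simp add: gr_carrier gr_mult)
  ultimately show ?thesis by (simp add: kappa_iota)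
qed

lemma kappa_r: "r \<in> carrier R \<Longrightarrow> hinv G H a \<Longrightarrow> \<kappa> (r \<otimes>\<^bsub>R\<^esub> a) = \<pi> r \<otimes>\<^bsub>S\<^esub> \<kappa> a"
  by (simp add: kappa_q r_hinv)

lemma iota_mult: "f \<in> carrier S \<Longrightarrow> f' \<in> carrier S \<Longrightarrow>
   \<iota> f \<otimes>\<^bsub>R\<^esub> \<iota> f' = scal (int (card H)) (\<iota> (f \<otimes>\<^bsub>S\<^esub> f'))"
proof -
  interpret Rc: cring R by (rule R_cring)
  have "\<iota> f \<otimes>\<^bsub>R\<^esub> \<iota> f' = N \<otimes>\<^bsub>R\<^esub> (q f \<otimes>\<^bsub>R\<^esub> \<iota> f')"
    by (metis N_q N_carrier q_carrier iota_carrier Rc.m_assoc)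
  also have "\<dots> = N \<otimes>\<^bsub>R\<^esub> \<iota> (f \<otimes>\<^bsub>S\<^esub> f')" by (simp add: q_iota)
  also have "\<dots> = scal (int (card H)) (\<iota> (f \<otimes>\<^bsub>S\<^esub> f'))" by (simp add: N_hinv iota_hinv)
  finally show ?thesis .
qed

lemma S_one_scal: "f \<in> carrier S \<Longrightarrow> scal m \<one>\<^bsub>S\<^esub> \<otimes>\<^bsub>S\<^esub> f = scal m f"
proof -
  assume f: "f \<in> carrier S"
  interpret Sc: cring S by (rule S_cring)
  show ?thesis using f by (simp add: scal_mult_left)
qed

lemma q_scal_one: "hinv G H a \<Longrightarrow> q (scal m \<one>\<^bsub>S\<^esub>) \<otimes>\<^bsub>R\<^esub> a = scal m a"
  by (metis S_one_scal iota_kappa iota_scal kappa_carrier q_iota)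

lemma hinv_scal: "hinv G H a \<Longrightarrow> hinv G H (scal m a)"
  by (auto simp: hinv_iff scal_carrier) (simp add: scal_def)

end

lemma dual_carrier: "f \<in> carrier (dual R N) \<longleftrightarrow> linear_form R N f"
  by (simp add: dual_def)
lemma dual_add: "f \<oplus>\<^bsub>dual R N\<^esub> g = (\<lambda>x\<in>carrier N. f x \<oplus>\<^bsub>R\<^esub> g x)"
  by (simp add: dual_def)
lemma dual_smult: "r \<odot>\<^bsub>dual R N\<^esub> f = (\<lambda>x\<in>carrier N. r \<otimes>\<^bsub>R\<^esub> f x)"
  by (simp add: dual_def)
lemma dual_zero: "\<zero>\<^bsub>dual R N\<^esub> = (\<lambda>x\<in>carrier N. \<zero>\<^bsub>R\<^esub>)"
  by (simp add: dual_def)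
lemma inv_carrier: "x \<in> carrier (invariants G H N) \<longleftrightarrow> x \<in> carrier N \<and> (\<forall>h\<in>H. gr_elem G h \<odot>\<^bsub>N\<^esub> x = x)"
  by (simp add: invariants_def)
lemma inv_add: "x \<oplus>\<^bsub>invariants G H N\<^esub> y = x \<oplus>\<^bsub>N\<^esub> y"
  by (simp add: invariants_def)
lemma inv_smult: "f \<odot>\<^bsub>invariants G H N\<^esub> x = quot_lift G H f \<odot>\<^bsub>N\<^esub> x"
  by (simp add: invariants_def)
lemma inv_zero: "\<zero>\<^bsub>invariants G H N\<^esub> = \<zero>\<^bsub>N\<^esub>"
  by (simp add: invariants_def)
lemma ad_carrier: "f \<in> carrier (alt_dual R D s) \<longleftrightarrow> alt_multilinear R D s f"
  by (simp add: alt_dual_def)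
lemma ad_add: "f \<oplus>\<^bsub>alt_dual R D s\<^esub> g = (\<lambda>xs\<in>tuples D s. f xs \<oplus>\<^bsub>R\<^esub> g xs)"
  by (simp add: alt_dual_def)
lemma ad_smult: "r \<odot>\<^bsub>alt_dual R D s\<^esub> f = (\<lambda>xs\<in>tuples D s. r \<otimes>\<^bsub>R\<^esub> f xs)"
  by (simp add: alt_dual_def)
lemma ad_zero: "\<zero>\<^bsub>alt_dual R D s\<^esub> = (\<lambda>xs\<in>tuples D s. \<zero>\<^bsub>R\<^esub>)"
  by (simp add: alt_dual_def)

definition closedmod :: "('r, 'a) ring_scheme \<Rightarrow> ('r, 'n, 'b) module_scheme \<Rightarrow> bool" where
  "closedmod R N \<longleftrightarrow> (\<forall>x\<in>carrier N. \<forall>y\<in>carrier N. x \<oplus>\<^bsub>N\<^esub> y \<in> carrier N) \<and>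
      (\<forall>r\<in>carrier R. \<forall>x\<in>carrier N. r \<odot>\<^bsub>N\<^esub> x \<in> carrier N)"

lemma closedmodD1: "closedmod R N \<Longrightarrow> x \<in> carrier N \<Longrightarrow> y \<in> carrier N \<Longrightarrow> x \<oplus>\<^bsub>N\<^esub> y \<in> carrier N"
  by (simp add: closedmod_def)
lemma closedmodD2: "closedmod R N \<Longrightarrow> r \<in> carrier R \<Longrightarrow> x \<in> carrier N \<Longrightarrow> r \<odot>\<^bsub>N\<^esub> x \<in> carrier N"
  by (simp add: closedmod_def)

lemma lf_val: "linear_form R N f \<Longrightarrow> x \<in> carrier N \<Longrightarrow> f x \<in> carrier R"
  by (auto simp: linear_form_def)
lemma lf_add: "linear_form R N f \<Longrightarrow> x \<in> carrier N \<Longrightarrow> y \<in> carrier N \<Longrightarrow> f (x \<oplus>\<^bsub>N\<^esub> y) = f x \<oplus>\<^bsub>R\<^esub> f y"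
  by (simp add: linear_form_def)
lemma lf_smult: "linear_form R N f \<Longrightarrow> r \<in> carrier R \<Longrightarrow> x \<in> carrier N \<Longrightarrow> f (r \<odot>\<^bsub>N\<^esub> x) = r \<otimes>\<^bsub>R\<^esub> f x"
  by (simp add: linear_form_def)
lemma lf_ext: "linear_form R N f \<Longrightarrow> x \<notin> carrier N \<Longrightarrow> f x = undefined"
  by (simp add: linear_form_def extensional_def)

lemma linear_formI:
  assumes "\<And>x. x \<in> carrier N \<Longrightarrow> f x \<in> carrier R" "f \<in> extensional (carrier N)"
    "\<And>x y. x \<in> carrier N \<Longrightarrow> y \<in> carrier N \<Longrightarrow> f (x \<oplus>\<^bsub>N\<^esub> y) = f x \<oplus>\<^bsub>R\<^esub> f y"
    "\<And>r x. r \<in> carrier R \<Longrightarrow> x \<in> carrier N \<Longrightarrow> f (r \<odot>\<^bsub>N\<^esub> x) = r \<otimes>\<^bsub>R\<^esub> f x"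
  shows "linear_form R N f"
  using assms by (auto simp: linear_form_def)

lemma dual_closed:
  assumes R: "cring R" and N: "closedmod R N"
  shows "closedmod R (dual R N)"
proof -
  interpret cring R by (rule R)
  have add: "linear_form R N (\<lambda>x\<in>carrier N. f x \<oplus>\<^bsub>R\<^esub> g x)" if f: "linear_form R N f" and g: "linear_form R N g" for f g
  proof (rule linear_formI)
    fix x y assume x: "x \<in> carrier N" and y: "y \<in> carrier N"
    have xy: "x \<oplus>\<^bsub>N\<^esub> y \<in> carrier N" using closedmodD1[OF N x y] .
    show "(\<lambda>x\<in>carrier N. f x \<oplus>\<^bsub>R\<^esub> g x) (x \<oplus>\<^bsub>N\<^esub> y) = (\<lambda>x\<in>carrier N. f x \<oplus>\<^bsub>R\<^esub> g x) x \<oplus>\<^bsub>R\<^esub> (\<lambda>x\<in>carrier N. f x \<oplus>\<^bsub>R\<^esub> g x) y"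
      using xy x y lf_add[OF f x y] lf_add[OF g x y] lf_val[OF f] lf_val[OF g] by (simp add: a_ac)
  next
    fix r x assume r: "r \<in> carrier R" and x: "x \<in> carrier N"
    have rx: "r \<odot>\<^bsub>N\<^esub> x \<in> carrier N" using closedmodD2[OF N r x] .
    show "(\<lambda>x\<in>carrier N. f x \<oplus>\<^bsub>R\<^esub> g x) (r \<odot>\<^bsub>N\<^esub> x) = r \<otimes>\<^bsub>R\<^esub> (\<lambda>x\<in>carrier N. f x \<oplus>\<^bsub>R\<^esub> g x) x"
      using rx x r lf_smult[OF f r x] lf_smult[OF g r x] lf_val[OF f] lf_val[OF g] by (simp add: r_distr)
  qed (use lf_val[OF f] lf_val[OF g] in auto)
  have sm: "linear_form R N (\<lambda>x\<in>carrier N. c \<otimes>\<^bsub>R\<^esub> f x)" if f: "linear_form R N f" and c: "c \<in> carrier R" for f c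
  proof (rule linear_formI)
    fix x y assume x: "x \<in> carrier N" and y: "y \<in> carrier N"
    have xy: "x \<oplus>\<^bsub>N\<^esub> y \<in> carrier N" using closedmodD1[OF N x y] .
    show "(\<lambda>x\<in>carrier N. c \<otimes>\<^bsub>R\<^esub> f x) (x \<oplus>\<^bsub>N\<^esub> y) = (\<lambda>x\<in>carrier N. c \<otimes>\<^bsub>R\<^esub> f x) x \<oplus>\<^bsub>R\<^esub> (\<lambda>x\<in>carrier N. c \<otimes>\<^bsub>R\<^esub> f x) y"
      using xy x y c lf_add[OF f x y] lf_val[OF f] by (simp add: r_distr)
  next
    fix r x assume r: "r \<in> carrier R" and x: "x \<in> carrier N"
    have rx: "r \<odot>\<^bsub>N\<^esub> x \<in> carrier N" using closedmodD2[OF N r x] .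
    show "(\<lambda>x\<in>carrier N. c \<otimes>\<^bsub>R\<^esub> f x) (r \<odot>\<^bsub>N\<^esub> x) = r \<otimes>\<^bsub>R\<^esub> (\<lambda>x\<in>carrier N. c \<otimes>\<^bsub>R\<^esub> f x) x"
      using rx x r c lf_smult[OF f r x] lf_val[OF f] by (simp add: m_lcomm)
  qed (use lf_val[OF f] c in auto)
  show ?thesis unfolding closedmod_def dual_carrier dual_add dual_smult
    by (simp add: add sm dual_carrier)
qed

lemma gr_finsum:
  assumes R: "cring (group_ring G)" and fin: "finite A" and F: "F \<in> A \<rightarrow> carrier (group_ring G)"
  shows "finsum (group_ring G) F A = (\<lambda>x. \<Sum>a\<in>A. F a x)"
  using fin F
proof (induction A rule: finite_induct)
  case empty
  interpret cring "group_ring G" by (rule R)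
  show ?case by (simp add: gr_zero)
next
  case (insert a A)
  interpret cring "group_ring G" by (rule R)
  have "finsum (group_ring G) F (insert a A) = F a \<oplus>\<^bsub>group_ring G\<^esub> finsum (group_ring G) F A"
    using insert by (intro finsum_insert) auto
  then show ?case using insert by (simp add: gr_add)
qed

lemma gr_ainv:
  assumes R: "cring (group_ring G)" and f: "f \<in> carrier (group_ring G)"
  shows "\<ominus>\<^bsub>group_ring G\<^esub> f = scal (-1) f"
proof -
  interpret cring "group_ring G" by (rule R)
  have "scal (-1) f \<in> carrier (group_ring G)" by (rule scal_carrier[OF f])
  moreover have "scal (-1) f \<oplus>\<^bsub>group_ring G\<^esub> f = \<zero>\<^bsub>group_ring G\<^esub>"
    by (simp add: scal_def gr_add gr_zero)
  ultimately show ?thesis using f by (intro minus_equality)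
qed

lemma gen_nat_pow: "[(n::nat)] \<cdot>\<^bsub>A\<^esub> f = rec_nat \<zero>\<^bsub>A\<^esub> (\<lambda>u b. b \<oplus>\<^bsub>A\<^esub> f) n"
  by (simp add: add_pow_def nat_pow_def)

lemma gr_nat_pow: "[(n::nat)] \<cdot>\<^bsub>group_ring G\<^esub> f = scal (int n) f"
proof (induction n)
  case 0 show ?case by (simp add: gen_nat_pow gr_zero scal_def)
next
  case (Suc n)
  have "[Suc n] \<cdot>\<^bsub>group_ring G\<^esub> f = [n] \<cdot>\<^bsub>group_ring G\<^esub> f \<oplus>\<^bsub>group_ring G\<^esub> f"
    by (simp add: gen_nat_pow)
  then show ?case using Suc by (simp add: gr_add scal_def distrib_right add.commute)
qed

lemma gr_int_pow:
  assumes R: "cring (group_ring G)" and f: "f \<in> carrier (group_ring G)"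
  shows "[(k::int)] \<cdot>\<^bsub>group_ring G\<^esub> f = scal k f"
proof -
  have np: "pow (add_monoid (group_ring G)) f n = scal (int n) f" for n :: nat
    using gr_nat_pow[of _ n] by (simp add: add_pow_def)
  show ?thesis
  proof (cases "k < 0")
    case True
    have "[k] \<cdot>\<^bsub>group_ring G\<^esub> f = pow (add_monoid (group_ring G)) f k"
      by (simp only: add_pow_def)
    also have "\<dots> = inv\<^bsub>add_monoid (group_ring G)\<^esub> (pow (add_monoid (group_ring G)) f (nat (-k)))"
      by (simp only: int_pow_def2 if_P[OF True])
    also have "\<dots> = \<ominus>\<^bsub>group_ring G\<^esub> (scal (int (nat (-k))) f)"
      by (simp only: np a_inv_def)
    also have "\<dots> = scal k f" using True by (simp add: gr_ainv[OF R scal_carrier[OF f]] scal_scal)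
    finally show ?thesis .
  next
    case False
    have "[k] \<cdot>\<^bsub>group_ring G\<^esub> f = pow (add_monoid (group_ring G)) f k"
      by (simp only: add_pow_def)
    also have "\<dots> = pow (add_monoid (group_ring G)) f (nat k)"
      by (simp only: int_pow_def2 if_not_P[OF False])
    also have "\<dots> = scal k f" using False by (simp only: np) simp
    finally show ?thesis .
  qed
qed

context gsetup begin
lemma hinv_add: "hinv G H a \<Longrightarrow> hinv G H b \<Longrightarrow> hinv G H (a \<oplus>\<^bsub>R\<^esub> b)"
  by (simp add: hinv_iff gr_carrier gr_add)
lemma hinv_rmult: "r \<in> carrier R \<Longrightarrow> hinv G H a \<Longrightarrow> hinv G H (r \<otimes>\<^bsub>R\<^esub> a)"
proof -
  assume r: "r \<in> carrier R" and a: "hinv G H a"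
  interpret Rc: cring R by (rule R_cring)
  have aR: "a \<in> carrier R" using a by (simp add: hinv_def)
  have "gr_elem G h \<otimes>\<^bsub>R\<^esub> (r \<otimes>\<^bsub>R\<^esub> a) = r \<otimes>\<^bsub>R\<^esub> a" if h: "h \<in> H" for h
  proof -
    have gh: "gr_elem G h \<in> carrier R" by (simp add: gr_carrier gr_elem_def)
    have "gr_elem G h \<otimes>\<^bsub>R\<^esub> (r \<otimes>\<^bsub>R\<^esub> a) = r \<otimes>\<^bsub>R\<^esub> (gr_elem G h \<otimes>\<^bsub>R\<^esub> a)"
      using gh r aR by (simp add: Rc.m_lcomm)
    also have "\<dots> = r \<otimes>\<^bsub>R\<^esub> a" using a h by (simp add: hinv_def)
    finally show ?thesis .
  qed
  then show ?thesis using r aR by (simp add: hinv_def)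
qed
lemma gr_elem_carrier: "gr_elem G h \<in> carrier R" by (simp add: gr_carrier gr_elem_def)
lemma hinv_N: "a \<in> carrier R \<Longrightarrow> hinv G H (N \<otimes>\<^bsub>R\<^esub> a)"
  by (simp add: N_proj iota_hinv)
end

locale msetup = gsetup G H for G :: "('g,'z) monoid_scheme" (structure) and H +
  fixes M :: "('g \<Rightarrow> int, 'm) module"
  assumes modM: "module (group_ring G) M" and fgM: "fin_gen (group_ring G) M"
begin

abbreviation "MD \<equiv> dual R M"
abbreviation "MDD \<equiv> dual R MD"
abbreviation "Y \<equiv> invariants G H MDD"
abbreviation "YD \<equiv> dual S Y"
abbreviation "ev \<equiv> eval_bidual R M"

definition "phiof \<chi> = (\<lambda>x\<in>carrier M. \<iota> (\<chi> (N \<odot>\<^bsub>MDD\<^esub> ev x)))"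
definition "alpha \<phi> = (\<lambda>y\<in>carrier Y. \<kappa> (y \<phi>))"

lemma M_closed: "closedmod R M"
proof -
  interpret module R M by (rule modM)
  show ?thesis by (simp add: closedmod_def)
qed
lemma MD_closed: "closedmod R MD" by (rule dual_closed[OF R_cring M_closed])
lemma MDD_closed: "closedmod R MDD" by (rule dual_closed[OF R_cring MD_closed])

lemma Y_pt: "y \<in> carrier Y \<Longrightarrow> \<psi> \<in> carrier MD \<Longrightarrow> hinv G H (y \<psi>)"
proof -
  assume y: "y \<in> carrier Y" and p: "\<psi> \<in> carrier MD"
  have yl: "linear_form R MD y" using y by (simp add: inv_carrier dual_carrier)
  have "gr_elem G h \<otimes>\<^bsub>R\<^esub> y \<psi> = y \<psi>" if h: "h \<in> H" for h
  proof -
    have "gr_elem G h \<odot>\<^bsub>MDD\<^esub> y = y" using y h by (simp add: inv_carrier)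
    then have "(gr_elem G h \<odot>\<^bsub>MDD\<^esub> y) \<psi> = y \<psi>" by simp
    then show ?thesis using p by (simp add: dual_smult)
  qed
  then show ?thesis using lf_val[OF yl p] by (simp add: hinv_def)
qed

lemma Y_intro: "y \<in> carrier MDD \<Longrightarrow> (\<And>\<psi>. \<psi> \<in> carrier MD \<Longrightarrow> hinv G H (y \<psi>)) \<Longrightarrow> y \<in> carrier Y"
proof -
  assume y: "y \<in> carrier MDD" and hv: "\<And>\<psi>. \<psi> \<in> carrier MD \<Longrightarrow> hinv G H (y \<psi>)"
  have yl: "linear_form R MD y" using y by (simp add: dual_carrier)
  have "gr_elem G h \<odot>\<^bsub>MDD\<^esub> y = y" if h: "h \<in> H" for h
  proof
    fix \<psi> show "(gr_elem G h \<odot>\<^bsub>MDD\<^esub> y) \<psi> = y \<psi>"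
      using hv h lf_ext[OF yl] by (cases "\<psi> \<in> carrier MD") (simp_all add: dual_smult hinv_def)
  qed
  then show ?thesis using y by (simp add: inv_carrier)
qed

lemma Y_sub: "y \<in> carrier Y \<Longrightarrow> y \<in> carrier MDD" by (simp add: inv_carrier)
lemma Y_lf: "y \<in> carrier Y \<Longrightarrow> linear_form R MD y" by (simp add: inv_carrier dual_carrier)

lemma Y_closed: "closedmod S Y"
  unfolding closedmod_def
proof (intro conjI ballI)
  fix x y assume x: "x \<in> carrier Y" and y: "y \<in> carrier Y"
  show "x \<oplus>\<^bsub>Y\<^esub> y \<in> carrier Y" unfolding inv_add
  proof (rule Y_intro)
    show "x \<oplus>\<^bsub>MDD\<^esub> y \<in> carrier MDD" by (rule closedmodD1[OF MDD_closed Y_sub[OF x] Y_sub[OF y]])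
    fix \<psi> assume p: "\<psi> \<in> carrier MD"
    show "hinv G H ((x \<oplus>\<^bsub>MDD\<^esub> y) \<psi>)" using p Y_pt[OF x p] Y_pt[OF y p] by (simp add: dual_add hinv_add)
  qed
next
  fix f y assume f: "f \<in> carrier S" and y: "y \<in> carrier Y"
  show "f \<odot>\<^bsub>Y\<^esub> y \<in> carrier Y" unfolding inv_smult
  proof (rule Y_intro)
    show "q f \<odot>\<^bsub>MDD\<^esub> y \<in> carrier MDD" by (rule closedmodD2[OF MDD_closed q_carrier Y_sub[OF y]])
    fix \<psi> assume p: "\<psi> \<in> carrier MD"
    show "hinv G H ((q f \<odot>\<^bsub>MDD\<^esub> y) \<psi>)" using p Y_pt[OF y p] by (simp add: dual_smult hinv_rmult q_carrier)
  qed
qed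

lemma ev_MDD: "x \<in> carrier M \<Longrightarrow> ev x \<in> carrier MDD"
proof -
  assume x: "x \<in> carrier M"
  show ?thesis unfolding dual_carrier
  proof (rule linear_formI)
    fix \<psi> assume "\<psi> \<in> carrier MD" then show "ev x \<psi> \<in> carrier R"
      using x by (simp add: eval_bidual_def dual_carrier lf_val)
  next
    show "ev x \<in> extensional (carrier MD)" by (simp add: eval_bidual_def)
  next
    fix \<psi> \<psi>' assume p: "\<psi> \<in> carrier MD" and p': "\<psi>' \<in> carrier MD"
    show "ev x (\<psi> \<oplus>\<^bsub>MD\<^esub> \<psi>') = ev x \<psi> \<oplus>\<^bsub>R\<^esub> ev x \<psi>'"
      using p p' x closedmodD1[OF MD_closed p p'] by (simp add: eval_bidual_def dual_add)
  next
    fix r \<psi> assume r: "r \<in> carrier R" and p: "\<psi> \<in> carrier MD"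
    show "ev x (r \<odot>\<^bsub>MD\<^esub> \<psi>) = r \<otimes>\<^bsub>R\<^esub> ev x \<psi>"
      using p r x closedmodD2[OF MD_closed r p] by (simp add: eval_bidual_def dual_smult)
  qed
qed

lemma ev_app: "\<psi> \<in> carrier MD \<Longrightarrow> ev x \<psi> = \<psi> x"
  by (simp add: eval_bidual_def)

lemma MD_lf: "\<psi> \<in> carrier MD \<Longrightarrow> linear_form R M \<psi>" by (simp add: dual_carrier)

lemma ev_Y: "x \<in> carrier (invariants G H M) \<Longrightarrow> ev x \<in> carrier Y"
proof -
  assume xi: "x \<in> carrier (invariants G H M)"
  have x: "x \<in> carrier M" using xi by (simp add: inv_carrier)
  show ?thesis
  proof (rule Y_intro[OF ev_MDD[OF x]])
    fix \<psi> assume p: "\<psi> \<in> carrier MD"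
    have "gr_elem G h \<otimes>\<^bsub>R\<^esub> \<psi> x = \<psi> x" if h: "h \<in> H" for h
    proof -
      have "\<psi> (gr_elem G h \<odot>\<^bsub>M\<^esub> x) = gr_elem G h \<otimes>\<^bsub>R\<^esub> \<psi> x"
        by (rule lf_smult[OF MD_lf[OF p] gr_elem_carrier x])
      moreover have "gr_elem G h \<odot>\<^bsub>M\<^esub> x = x" using xi h by (simp add: inv_carrier)
      ultimately show ?thesis by simp
    qed
    then show "hinv G H (ev x \<psi>)" using p lf_val[OF MD_lf[OF p] x] by (simp add: ev_app hinv_def)
  qed
qed

lemma w_eq: "x \<in> carrier M \<Longrightarrow> N \<odot>\<^bsub>MDD\<^esub> ev x = (\<lambda>\<psi>\<in>carrier MD. N \<otimes>\<^bsub>R\<^esub> \<psi> x)"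
  by (auto simp: dual_smult ev_app)

lemma w_Y: "x \<in> carrier M \<Longrightarrow> N \<odot>\<^bsub>MDD\<^esub> ev x \<in> carrier Y"
proof -
  assume x: "x \<in> carrier M"
  show ?thesis
  proof (rule Y_intro)
    show "N \<odot>\<^bsub>MDD\<^esub> ev x \<in> carrier MDD" by (rule closedmodD2[OF MDD_closed N_carrier ev_MDD[OF x]])
    fix \<psi> assume p: "\<psi> \<in> carrier MD"
    show "hinv G H ((N \<odot>\<^bsub>MDD\<^esub> ev x) \<psi>)"
      using p x lf_val[OF MD_lf[OF p] x] by (simp add: w_eq hinv_N)
  qed
qed

end

lemma rat_denoms:
  assumes "finite I"
  shows "\<exists>D::int. D > 0 \<and> (\<forall>i\<in>I. \<exists>n::int. of_int D * f i = (of_int n :: rat))"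
  using assms
proof (induction I rule: finite_induct)
  case empty then show ?case by (intro exI[of _ 1]) simp
next
  case (insert j I)
  then obtain D where D: "D > 0" "\<forall>i\<in>I. \<exists>n::int. of_int D * f i = (of_int n :: rat)" by blast
  obtain p q where pq: "quotient_of (f j) = (p, q)" by (cases "quotient_of (f j)")
  have q: "q > 0" using quotient_of_denom_pos[OF pq] .
  have fj: "f j = of_int p / of_int q" using quotient_of_div[OF pq] .
  show ?case
  proof (rule exI[of _ "D * q"], intro conjI ballI)
    show "D * q > 0" using D q by simp
    fix i assume i: "i \<in> insert j I"
    show "\<exists>n::int. of_int (D * q) * f i = (of_int n :: rat)"
    proof (cases "i = j")
      case True
      then show ?thesis using q by (intro exI[of _ "D * p"]) (simp add: fj)
    next
      case False
      then have "i \<in> I" using i by simp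
      then obtain n where "of_int D * f i = (of_int n :: rat)" using D by blast
      then show ?thesis by (intro exI[of _ "n * q"]) (simp add: algebra_simps)
    qed
  qed
qed

lemma rat_frac: "\<exists>a b::int. b > 0 \<and> (c::rat) = of_int a / of_int b"
  by (metis quotient_of_denom_pos quotient_of_div surj_pair)

lemma vs_fun: "vector_space (\<lambda>(q::rat) (f::'i \<Rightarrow> rat). \<lambda>i. q * f i)"
  by unfold_locales (auto simp: fun_eq_iff algebra_simps)

lemma vsp_fun: "vector_space_pair (\<lambda>(q::rat) (f::'i \<Rightarrow> rat). \<lambda>i. q * f i) ((*) :: rat \<Rightarrow> rat \<Rightarrow> rat)"
  unfolding vector_space_pair_def
  by (auto intro: vs_fun) (unfold_locales, auto simp: algebra_simps)

lemma lf_finsum: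
  assumes R: "cring R" and M: "module R M" and p: "linear_form R M \<psi>" and fin: "finite A"
    and f: "f \<in> A \<rightarrow> carrier M"
  shows "\<psi> (finsum M f A) = finsum R (\<lambda>a. \<psi> (f a)) A"
  using fin f
proof (induction A rule: finite_induct)
  interpret module R M by (rule M)
  case empty
  have "\<psi> \<zero>\<^bsub>M\<^esub> = \<psi> (\<zero>\<^bsub>R\<^esub> \<odot>\<^bsub>M\<^esub> \<zero>\<^bsub>M\<^esub>)" by simp
  also have "\<dots> = \<zero>\<^bsub>R\<^esub>" using lf_smult[OF p, of "\<zero>\<^bsub>R\<^esub>" "\<zero>\<^bsub>M\<^esub>"] lf_val[OF p, of "\<zero>\<^bsub>M\<^esub>"] by simp
  finally show ?case by simp
next
  interpret module R M by (rule M)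
  case (insert a A)
  have fa: "f a \<in> carrier M" and fA: "f \<in> A \<rightarrow> carrier M" using insert by auto
  have "\<psi> (finsum M f (insert a A)) = \<psi> (f a \<oplus>\<^bsub>M\<^esub> finsum M f A)"
    using insert fa fA by (simp add: M.finsum_insert)
  also have "\<dots> = \<psi> (f a) \<oplus>\<^bsub>R\<^esub> \<psi> (finsum M f A)" using lf_add[OF p fa M.finsum_closed[OF fA]] .
  also have "\<dots> = finsum R (\<lambda>a. \<psi> (f a)) (insert a A)"
    using insert fa fA lf_val[OF p] by (simp add: finsum_insert Pi_def)
  finally show ?case .
qed

context msetup begin

lemma star: "y \<in> carrier MDD \<Longrightarrow> \<exists>k. k \<noteq> 0 \<and> (\<exists>x\<in>carrier M. \<forall>\<psi>\<in>carrier MD. \<psi> x = scal k (y \<psi>))"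
proof -
  assume yMDD: "y \<in> carrier MDD"
  have yl: "linear_form R MD y" using yMDD by (simp add: dual_carrier)
  interpret Rc: cring R by (rule R_cring)
  interpret Mm: module R M by (rule modM)
  obtain A where Afin: "finite A" and AM: "A \<subseteq> carrier M"
    and gen: "\<And>x. x \<in> carrier M \<Longrightarrow> \<exists>c. c \<in> A \<rightarrow> carrier R \<and> x = finsum M (\<lambda>a. c a \<odot>\<^bsub>M\<^esub> a) A"
    using fgM unfolding fin_gen_def by blast
  define I where "I = A \<times> carrier G"
  have Ifin: "finite I" unfolding I_def using Afin finG by simp
  define e :: "('m \<Rightarrow> 'g \<Rightarrow> int) \<Rightarrow> ('m \<times> 'g) \<Rightarrow> rat"
    where "e \<psi> = (\<lambda>(a, g). if a \<in> A \<and> g \<in> carrier G then rat_of_int (\<psi> a g) else 0)" for \<psi>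
  define y0 where "y0 \<psi> = y \<psi> \<one>" for \<psi>
  define isc where "isc n = scal n \<one>\<^bsub>R\<^esub>" for n
  have isc_R: "isc n \<in> carrier R" for n unfolding isc_def by (rule scal_carrier) simp
  have isc_mult: "isc n \<otimes>\<^bsub>R\<^esub> a = scal n a" if "a \<in> carrier R" for n a
    using that by (simp add: isc_def scal_mult_left)
  have isc_MD: "isc n \<odot>\<^bsub>MD\<^esub> \<psi> \<in> carrier MD" if "\<psi> \<in> carrier MD" for n \<psi>
    by (rule closedmodD2[OF MD_closed isc_R that])
  have add_MD: "\<psi> \<oplus>\<^bsub>MD\<^esub> \<psi>' \<in> carrier MD" if "\<psi> \<in> carrier MD" "\<psi>' \<in> carrier MD" for \<psi> \<psi>'
    by (rule closedmodD1[OF MD_closed that])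
  have e_isc: "e (isc n \<odot>\<^bsub>MD\<^esub> \<psi>) = (\<lambda>i. of_int n * e \<psi> i)" if p: "\<psi> \<in> carrier MD" for n \<psi>
  proof
    fix i show "e (isc n \<odot>\<^bsub>MD\<^esub> \<psi>) i = of_int n * e \<psi> i"
      using AM lf_val[OF MD_lf[OF p]] by (cases i) (auto simp: e_def dual_smult isc_mult scal_def)
  qed
  have e_add: "e (\<psi> \<oplus>\<^bsub>MD\<^esub> \<psi>') = (\<lambda>i. e \<psi> i + e \<psi>' i)" if "\<psi> \<in> carrier MD" "\<psi>' \<in> carrier MD" for \<psi> \<psi>'
  proof
    fix i show "e (\<psi> \<oplus>\<^bsub>MD\<^esub> \<psi>') i = e \<psi> i + e \<psi>' i"
      using AM by (cases i) (auto simp: e_def dual_add gr_add)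
  qed
  have y0_isc: "y0 (isc n \<odot>\<^bsub>MD\<^esub> \<psi>) = n * y0 \<psi>" if p: "\<psi> \<in> carrier MD" for n \<psi>
    using lf_smult[OF yl isc_R p] lf_val[OF yl p] by (simp add: y0_def isc_mult scal_def)
  have y0_add: "y0 (\<psi> \<oplus>\<^bsub>MD\<^esub> \<psi>') = y0 \<psi> + y0 \<psi>'" if p: "\<psi> \<in> carrier MD" "\<psi>' \<in> carrier MD" for \<psi> \<psi>'
    using lf_add[OF yl p] by (simp add: y0_def gr_add)
  have e_inj: "\<psi> = \<psi>'" if p: "\<psi> \<in> carrier MD" and p': "\<psi>' \<in> carrier MD" and eq: "e \<psi> = e \<psi>'" for \<psi> \<psi>'
  proof
    fix x show "\<psi> x = \<psi>' x"
    proof (cases "x \<in> carrier M")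
      case True
      obtain c where c: "c \<in> A \<rightarrow> carrier R" and xc: "x = finsum M (\<lambda>a. c a \<odot>\<^bsub>M\<^esub> a) A"
        using gen[OF True] by blast
      have cf: "(\<lambda>a. c a \<odot>\<^bsub>M\<^esub> a) \<in> A \<rightarrow> carrier M" using c AM by auto
      have pa: "\<psi> a = \<psi>' a" if a: "a \<in> A" for a
      proof
        fix g show "\<psi> a g = \<psi>' a g"
        proof (cases "g \<in> carrier G")
          case True then show ?thesis using fun_cong[OF eq, of "(a, g)"] a by (simp add: e_def)
        next
          case False
          have "\<psi> a \<in> carrier R" "\<psi>' a \<in> carrier R" using a AM lf_val[OF MD_lf[OF p]] lf_val[OF MD_lf[OF p']] by auto
          then show ?thesis using False by (simp add: gr_carrier)
        qed
      qed
      have eqa: "\<psi> (c a \<odot>\<^bsub>M\<^esub> a) = \<psi>' (c a \<odot>\<^bsub>M\<^esub> a)" if a: "a \<in> A" for a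
      proof -
        have ca: "c a \<in> carrier R" and aM: "a \<in> carrier M" using a c AM by auto
        show ?thesis using lf_smult[OF MD_lf[OF p] ca aM] lf_smult[OF MD_lf[OF p'] ca aM] pa[OF a] by simp
      qed
      have cla: "\<psi>' (c a \<odot>\<^bsub>M\<^esub> a) \<in> carrier R" if a: "a \<in> A" for a
      proof -
        have ca: "c a \<in> carrier R" and aM: "a \<in> carrier M" using a c AM by auto
        show ?thesis by (rule lf_val[OF MD_lf[OF p'] closedmodD2[OF M_closed ca aM]])
      qed
      show ?thesis unfolding xc lf_finsum[OF R_cring modM MD_lf[OF p] Afin cf] lf_finsum[OF R_cring modM MD_lf[OF p'] Afin cf]
        by (rule Rc.finsum_cong') (simp_all add: eqa cla Pi_def)
    next
      case False then show ?thesis using lf_ext[OF MD_lf[OF p]] lf_ext[OF MD_lf[OF p']] by simp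
    qed
  qed
  define scl where "scl = (\<lambda>(q::rat) (f::'m \<times> 'g \<Rightarrow> rat). \<lambda>i. q * f i)"
  interpret V: vector_space scl unfolding scl_def by (rule vs_fun)
  interpret VP: vector_space_pair scl "(*) :: rat \<Rightarrow> rat \<Rightarrow> rat" unfolding scl_def by (rule vsp_fun)
  obtain B where BE: "B \<subseteq> e ` carrier MD" and Bi: "V.independent B" and EB: "e ` carrier MD \<subseteq> V.span B"
    using V.maximal_independent_subset by blast
  define pre where "pre b = (SOME \<psi>. \<psi> \<in> carrier MD \<and> e \<psi> = b)" for b
  have pre: "pre b \<in> carrier MD \<and> e (pre b) = b" if "b \<in> B" for b
  proof -
    have "\<exists>\<psi>. \<psi> \<in> carrier MD \<and> e \<psi> = b" using that BE by auto
    then show ?thesis unfolding pre_def by (rule someI_ex)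
  qed
  define L where "L = VP.construct B (\<lambda>b. rat_of_int (y0 (pre b)))"
  have Llin: "Vector_Spaces.linear scl (*) L" unfolding L_def by (rule VP.linear_construct[OF Bi])
  have Lhom: "module_hom scl (*) L" using Llin by (simp add: module_hom_iff_linear)
  have LB: "L b = rat_of_int (y0 (pre b))" if "b \<in> B" for b
    unfolding L_def by (rule VP.construct_basis[OF Bi that])
  define good where "good v \<longleftrightarrow> (\<exists>d::int. d > 0 \<and> (\<exists>\<psi>\<in>carrier MD. (\<lambda>i. of_int d * v i) = e \<psi> \<and> L v * of_int d = of_int (y0 \<psi>)))" for v
  have good_span: "good v" if v: "v \<in> V.span B" for v
    using v
  proof (induction rule: V.span_induct_alt)
    case base
    have z: "\<zero>\<^bsub>MD\<^esub> \<in> carrier MD" unfolding dual_zero dual_carrier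
      by (rule linear_formI) (auto simp: closedmodD1[OF M_closed] closedmodD2[OF M_closed])
    have zz: "isc 0 \<odot>\<^bsub>MD\<^esub> \<zero>\<^bsub>MD\<^esub> = \<zero>\<^bsub>MD\<^esub>"
      unfolding dual_smult dual_zero by (rule restrict_ext) (simp add: Rc.r_null[OF isc_R])
    have e0: "e \<zero>\<^bsub>MD\<^esub> = (\<lambda>i. 0)" using e_isc[OF z, of 0] zz by simp
    have y00: "y0 \<zero>\<^bsub>MD\<^esub> = 0" using y0_isc[OF z, of 0] zz by simp
    have L0: "L 0 = 0" using module_hom.zero[OF Lhom] by simp
    show ?case unfolding good_def
      by (intro exI[of _ 1] conjI bexI[of _ "\<zero>\<^bsub>MD\<^esub>"] z) (simp_all add: e0 y00 L0 fun_eq_iff)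
  next
    case (step c x v)
    then obtain d \<psi> where d: "d > 0" and p: "\<psi> \<in> carrier MD" and dv: "(\<lambda>i. of_int d * v i) = e \<psi>"
      and Lv: "L v * of_int d = of_int (y0 \<psi>)" unfolding good_def by blast
    obtain a b where b: "b > 0" and c: "c = of_int a / of_int b" using rat_frac by blast
    have px: "pre x \<in> carrier MD" and ex: "e (pre x) = x" using pre[OF step(1)] by auto
    define \<psi>' where "\<psi>' = (isc (a * d) \<odot>\<^bsub>MD\<^esub> pre x) \<oplus>\<^bsub>MD\<^esub> (isc b \<odot>\<^bsub>MD\<^esub> \<psi>)"
    have p': "\<psi>' \<in> carrier MD" unfolding \<psi>'_def by (intro add_MD isc_MD px p)
    show ?case unfolding good_def
    proof (intro exI[of _ "b * d"] conjI bexI[of _ \<psi>'] p')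
      show "b * d > 0" using b d by simp
      have dvi: "e \<psi> i = of_int d * v i" for i using fun_cong[OF dv, of i] by simp
      have bb: "of_int b * c = (of_int a :: rat)" using b by (simp add: c)
      have e': "e \<psi>' = (\<lambda>i. of_int (a * d) * x i + of_int b * (of_int d * v i))"
      proof -
        have "e \<psi>' = (\<lambda>i. e (isc (a * d) \<odot>\<^bsub>MD\<^esub> pre x) i + e (isc b \<odot>\<^bsub>MD\<^esub> \<psi>) i)"
          unfolding \<psi>'_def by (rule e_add[OF isc_MD[OF px] isc_MD[OF p]])
        also have "\<dots> = (\<lambda>i. of_int (a * d) * x i + of_int b * e \<psi> i)"
          by (simp only: e_isc[OF px] e_isc[OF p] ex)
        finally show ?thesis by (simp only: dvi)
      qed
      have ar: "of_int (b * d) * (c * u + w) = of_int (a * d) * u + of_int b * (of_int d * w)" for u w :: rat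
      proof -
        have h1: "of_int (b * d) * (c * u + w) = of_int d * (of_int b * c) * u + of_int b * (of_int d * w)"
          by (simp only: of_int_mult ring_distribs mult_ac)
        show ?thesis using h1[unfolded bb] by (simp only: of_int_mult mult_ac)
      qed
      show "(\<lambda>i. of_int (b * d) * (scl c x + v) i) = e \<psi>'"
        unfolding e' scl_def plus_fun_apply ar ..
      have y': "y0 \<psi>' = a * d * y0 (pre x) + b * y0 \<psi>"
        unfolding \<psi>'_def by (simp only: y0_add[OF isc_MD[OF px] isc_MD[OF p]] y0_isc[OF px] y0_isc[OF p])
      have "L (scl c x + v) = c * L x + L v"
        using module_hom.add[OF Lhom] module_hom.scale[OF Lhom] by simp
      then have "L (scl c x + v) * of_int (b * d) = of_int (b * d) * (c * of_int (y0 (pre x)) + L v)"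
        using LB[OF step(1)] by (simp only: mult.commute)
      also have "\<dots> = of_int (a * d) * of_int (y0 (pre x)) + of_int b * (of_int d * L v)" by (rule ar)
      also have "\<dots> = of_int (a * d) * of_int (y0 (pre x)) + of_int b * of_int (y0 \<psi>)"
        using Lv by (simp only: mult.commute)
      also have "\<dots> = of_int (y0 \<psi>')" unfolding y' by simp
      finally show "L (scl c x + v) * of_int (b * d) = of_int (y0 \<psi>')" .
    qed
  qed
  have Le: "L (e \<psi>) = of_int (y0 \<psi>)" if p: "\<psi> \<in> carrier MD" for \<psi>
  proof -
    have "good (e \<psi>)" using EB p by (intro good_span) auto
    then obtain d \<psi>' where d: "d > 0" and p': "\<psi>' \<in> carrier MD" and dv: "(\<lambda>i. of_int d * e \<psi> i) = e \<psi>'"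
      and Lv: "L (e \<psi>) * of_int d = of_int (y0 \<psi>')" unfolding good_def by blast
    have "\<psi>' = isc d \<odot>\<^bsub>MD\<^esub> \<psi>" using e_inj[OF p' isc_MD[OF p]] dv e_isc[OF p] by simp
    then have "L (e \<psi>) * of_int d = of_int d * of_int (y0 \<psi>)" using Lv y0_isc[OF p] by simp
    then show ?thesis using d by simp
  qed
  define \<delta> where "\<delta> i = (\<lambda>j. if j = i then 1 else 0 :: rat)" for i :: "'m \<times> 'g"
  have sum_app: "(\<Sum>i\<in>J. g i) j = (\<Sum>i\<in>J. g i j)" for J and g :: "'m \<times> 'g \<Rightarrow> 'm \<times> 'g \<Rightarrow> rat" and j
    by (induction J rule: infinite_finite_induct) auto
  have eI: "e \<psi> = (\<Sum>i\<in>I. scl (e \<psi> i) (\<delta> i))" for \<psi>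
  proof
    fix j
    have "(\<Sum>i\<in>I. scl (e \<psi> i) (\<delta> i)) j = (\<Sum>i\<in>I. if i = j then e \<psi> i else 0)"
      unfolding sum_app by (rule sum.cong[OF refl]) (simp add: scl_def \<delta>_def)
    also have "\<dots> = (if j \<in> I then e \<psi> j else 0)" by (rule sum.delta[OF Ifin])
    also have "\<dots> = e \<psi> j" by (cases j) (simp add: I_def e_def)
    finally show "e \<psi> j = (\<Sum>i\<in>I. scl (e \<psi> i) (\<delta> i)) j" by simp
  qed
  have Lsum: "L (e \<psi>) = (\<Sum>i\<in>I. e \<psi> i * L (\<delta> i))" for \<psi>
  proof -
    have "L (e \<psi>) = L (\<Sum>i\<in>I. scl (e \<psi> i) (\<delta> i))" by (rule arg_cong[OF eI])
    also have "\<dots> = (\<Sum>i\<in>I. L (scl (e \<psi> i) (\<delta> i)))" by (rule module_hom.sum[OF Lhom])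
    also have "\<dots> = (\<Sum>i\<in>I. e \<psi> i * L (\<delta> i))" by (simp only: module_hom.scale[OF Lhom])
    finally show ?thesis .
  qed
  obtain D where D: "D > 0" and Dn: "\<forall>i\<in>I. \<exists>n::int. of_int D * L (\<delta> i) = of_int n"
    using rat_denoms[OF Ifin, of "\<lambda>i. L (\<delta> i)"] by blast
  obtain nn where nn: "\<And>i. i \<in> I \<Longrightarrow> of_int D * L (\<delta> i) = of_int (nn i)"
    using Dn by metis
  have Dy: "D * y0 \<psi> = (\<Sum>i\<in>I. \<psi> (fst i) (snd i) * nn i)" if p: "\<psi> \<in> carrier MD" for \<psi>
  proof -
    have "rat_of_int (D * y0 \<psi>) = of_int D * L (e \<psi>)" using Le[OF p] by simp
    also have "\<dots> = (\<Sum>i\<in>I. e \<psi> i * (of_int D * L (\<delta> i)))"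
      by (simp only: Lsum sum_distrib_left mult_ac)
    also have "\<dots> = (\<Sum>i\<in>I. rat_of_int (\<psi> (fst i) (snd i) * nn i))"
    proof (rule sum.cong[OF refl])
      fix i assume i: "i \<in> I"
      then obtain a g where ag: "i = (a, g)" "a \<in> A" "g \<in> carrier G" by (auto simp: I_def)
      show "e \<psi> i * (of_int D * L (\<delta> i)) = rat_of_int (\<psi> (fst i) (snd i) * nn i)"
        by (simp only: nn[OF i]) (simp add: ag e_def)
    qed
    also have "\<dots> = rat_of_int (\<Sum>i\<in>I. \<psi> (fst i) (snd i) * nn i)" by simp
    finally show ?thesis by (simp only: of_int_eq_iff)
  qed
  define r where "r a = (\<lambda>u. if u \<in> carrier G then nn (a, inv u) else 0)" for a
  have rR: "r a \<in> carrier R" for a by (simp add: r_def gr_carrier)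
  define x where "x = finsum M (\<lambda>a. r a \<odot>\<^bsub>M\<^esub> a) A"
  have rf: "(\<lambda>a. r a \<odot>\<^bsub>M\<^esub> a) \<in> A \<rightarrow> carrier M" using AM rR closedmodD2[OF M_closed] by auto
  have xM: "x \<in> carrier M" unfolding x_def by (rule Mm.finsum_closed[OF rf])
  have P1: "\<psi> x \<one> = D * y \<psi> \<one>" if p: "\<psi> \<in> carrier MD" for \<psi>
  proof -
    have vals: "r a \<otimes>\<^bsub>R\<^esub> \<psi> a \<in> carrier R" if "a \<in> A" for a
      using that AM lf_val[OF MD_lf[OF p]] rR by auto
    have "\<psi> x = finsum R (\<lambda>a. \<psi> (r a \<odot>\<^bsub>M\<^esub> a)) A"
      unfolding x_def by (rule lf_finsum[OF R_cring modM MD_lf[OF p] Afin rf])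
    also have "\<dots> = finsum R (\<lambda>a. r a \<otimes>\<^bsub>R\<^esub> \<psi> a) A"
      by (rule Rc.finsum_cong') (use AM rR lf_smult[OF MD_lf[OF p]] vals in auto)
    also have "\<dots> = (\<lambda>u. \<Sum>a\<in>A. (r a \<otimes>\<^bsub>R\<^esub> \<psi> a) u)"
      by (rule gr_finsum[OF R_cring Afin]) (use vals in auto)
    finally have "\<psi> x \<one> = (\<Sum>a\<in>A. (r a \<otimes>\<^bsub>R\<^esub> \<psi> a) \<one>)" by simp
    also have "\<dots> = (\<Sum>a\<in>A. \<Sum>u\<in>carrier G. nn (a, inv u) * \<psi> a (inv u))"
      by (rule sum.cong) (auto simp: gr_mult r_def)
    also have "\<dots> = (\<Sum>a\<in>A. \<Sum>g\<in>carrier G. nn (a, g) * \<psi> a g)"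
      by (rule sum.cong[OF refl], rule sum.reindex_bij_witness[where i="\<lambda>u. inv u" and j="\<lambda>u. inv u"]) auto
    also have "\<dots> = (\<Sum>i\<in>I. \<psi> (fst i) (snd i) * nn i)"
      unfolding I_def sum.cartesian_product by (rule sum.cong) (auto simp: mult.commute)
    also have "\<dots> = D * y \<psi> \<one>" using Dy[OF p] by (simp add: y0_def)
    finally show ?thesis .
  qed
  have "\<psi> x = scal D (y \<psi>)" if p: "\<psi> \<in> carrier MD" for \<psi>
  proof
    fix g show "\<psi> x g = scal D (y \<psi>) g"
    proof (cases "g \<in> carrier G")
      case True
      have ig: "inv g \<in> carrier G" using True by simp
      have p': "gr_elem G (inv g) \<odot>\<^bsub>MD\<^esub> \<psi> \<in> carrier MD" by (rule closedmodD2[OF MD_closed gr_elem_carrier p])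
      have "(gr_elem G (inv g) \<odot>\<^bsub>MD\<^esub> \<psi>) x \<one> = D * y (gr_elem G (inv g) \<odot>\<^bsub>MD\<^esub> \<psi>) \<one>" by (rule P1[OF p'])
      moreover have "(gr_elem G (inv g) \<odot>\<^bsub>MD\<^esub> \<psi>) x \<one> = \<psi> x g"
        using xM ig True by (simp add: dual_smult gr_elem_mult)
      moreover have "y (gr_elem G (inv g) \<odot>\<^bsub>MD\<^esub> \<psi>) \<one> = y \<psi> g"
        using lf_smult[OF yl gr_elem_carrier p] ig True by (simp add: gr_elem_mult)
      ultimately show ?thesis by (simp add: scal_def)
    next
      case False
      have "\<psi> x \<in> carrier R" "y \<psi> \<in> carrier R" using lf_val[OF MD_lf[OF p] xM] lf_val[OF yl p] by auto
      then show ?thesis using False by (simp add: gr_carrier scal_def)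
    qed
  qed
  then show ?thesis using D xM by (intro exI[of _ D]) auto
qed

end

context msetup begin

lemma YD_lf: "\<chi> \<in> carrier YD \<Longrightarrow> linear_form S Y \<chi>" by (simp add: dual_carrier)

lemma w_add: "x \<in> carrier M \<Longrightarrow> x' \<in> carrier M \<Longrightarrow>
  N \<odot>\<^bsub>MDD\<^esub> ev (x \<oplus>\<^bsub>M\<^esub> x') = (N \<odot>\<^bsub>MDD\<^esub> ev x) \<oplus>\<^bsub>Y\<^esub> (N \<odot>\<^bsub>MDD\<^esub> ev x')"
proof -
  assume x: "x \<in> carrier M" and x': "x' \<in> carrier M"
  interpret Rc: cring R by (rule R_cring)
  have xx: "x \<oplus>\<^bsub>M\<^esub> x' \<in> carrier M" by (rule closedmodD1[OF M_closed x x'])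
  have key: "N \<otimes>\<^bsub>R\<^esub> \<psi> (x \<oplus>\<^bsub>M\<^esub> x') = N \<otimes>\<^bsub>R\<^esub> \<psi> x \<oplus>\<^bsub>R\<^esub> N \<otimes>\<^bsub>R\<^esub> \<psi> x'"
    if p: "\<psi> \<in> carrier MD" for \<psi>
    using p lf_add[OF MD_lf[OF p] x x'] lf_val[OF MD_lf[OF p] x] lf_val[OF MD_lf[OF p] x']
    by (simp add: Rc.r_distr N_carrier)
  show ?thesis unfolding inv_add dual_add dual_smult
    by (rule restrict_ext) (simp add: ev_app key)
qed

lemma w_smult: "r \<in> carrier R \<Longrightarrow> x \<in> carrier M \<Longrightarrow>
  N \<odot>\<^bsub>MDD\<^esub> ev (r \<odot>\<^bsub>M\<^esub> x) = \<pi> r \<odot>\<^bsub>Y\<^esub> (N \<odot>\<^bsub>MDD\<^esub> ev x)"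
proof -
  assume r: "r \<in> carrier R" and x: "x \<in> carrier M"
  interpret Rc: cring R by (rule R_cring)
  have rx: "r \<odot>\<^bsub>M\<^esub> x \<in> carrier M" by (rule closedmodD2[OF M_closed r x])
  have key: "N \<otimes>\<^bsub>R\<^esub> \<psi> (r \<odot>\<^bsub>M\<^esub> x) = q (\<pi> r) \<otimes>\<^bsub>R\<^esub> (N \<otimes>\<^bsub>R\<^esub> \<psi> x)"
    if True: "\<psi> \<in> carrier MD" for \<psi>
  proof -
    have a: "\<psi> x \<in> carrier R" by (rule lf_val[OF MD_lf[OF True] x])
    have "N \<otimes>\<^bsub>R\<^esub> \<psi> (r \<odot>\<^bsub>M\<^esub> x) = r \<otimes>\<^bsub>R\<^esub> (N \<otimes>\<^bsub>R\<^esub> \<psi> x)"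
      using lf_smult[OF MD_lf[OF True] r x] a r by (simp add: Rc.m_lcomm N_carrier)
    also have "\<dots> = q (\<pi> r) \<otimes>\<^bsub>R\<^esub> (N \<otimes>\<^bsub>R\<^esub> \<psi> x)"
      by (rule r_hinv[OF r hinv_N[OF a]])
    finally show ?thesis .
  qed
  show ?thesis unfolding inv_smult dual_smult
    by (rule restrict_ext) (simp add: ev_app key)
qed

lemma phiof_MD: "\<chi> \<in> carrier YD \<Longrightarrow> phiof \<chi> \<in> carrier MD"
proof -
  assume c: "\<chi> \<in> carrier YD"
  note cl = YD_lf[OF c]
  show ?thesis unfolding dual_carrier
  proof (rule linear_formI)
    show "\<And>x. x \<in> carrier M \<Longrightarrow> phiof \<chi> x \<in> carrier R" by (simp add: phiof_def iota_carrier)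
    show "phiof \<chi> \<in> extensional (carrier M)" by (simp add: phiof_def)
  next
    fix x x' assume x: "x \<in> carrier M" and x': "x' \<in> carrier M"
    have xx: "x \<oplus>\<^bsub>M\<^esub> x' \<in> carrier M" by (rule closedmodD1[OF M_closed x x'])
    show "phiof \<chi> (x \<oplus>\<^bsub>M\<^esub> x') = phiof \<chi> x \<oplus>\<^bsub>R\<^esub> phiof \<chi> x'"
      using xx x x' by (simp add: phiof_def w_add lf_add[OF cl w_Y[OF x] w_Y[OF x']] iota_add)
  next
    fix r x assume r: "r \<in> carrier R" and x: "x \<in> carrier M"
    have rx: "r \<odot>\<^bsub>M\<^esub> x \<in> carrier M" by (rule closedmodD2[OF M_closed r x])
    show "phiof \<chi> (r \<odot>\<^bsub>M\<^esub> x) = r \<otimes>\<^bsub>R\<^esub> phiof \<chi> x"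
      using rx x r by (simp add: phiof_def w_smult lf_smult[OF cl proj_carrier w_Y[OF x]]
          proj_iota lf_val[OF cl w_Y[OF x]])
  qed
qed

lemma phiof_add: "\<chi> \<in> carrier YD \<Longrightarrow> \<chi>' \<in> carrier YD \<Longrightarrow> phiof (\<chi> \<oplus>\<^bsub>YD\<^esub> \<chi>') = phiof \<chi> \<oplus>\<^bsub>MD\<^esub> phiof \<chi>'"
  unfolding phiof_def dual_add[of R M] 
proof (rule restrict_ext)
  fix x assume x: "x \<in> carrier M"
  note wy = w_Y[OF x]
  show "\<iota> ((\<chi> \<oplus>\<^bsub>YD\<^esub> \<chi>') (N \<odot>\<^bsub>MDD\<^esub> ev x)) =
         (\<lambda>x\<in>carrier M. \<iota> (\<chi> (N \<odot>\<^bsub>MDD\<^esub> ev x))) x \<oplus>\<^bsub>R\<^esub> (\<lambda>x\<in>carrier M. \<iota> (\<chi>' (N \<odot>\<^bsub>MDD\<^esub> ev x))) x"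
    using x wy by (simp only: dual_add[of S] restrict_apply' iota_add)
qed

lemma phiof_smult: "f \<in> carrier S \<Longrightarrow> \<chi> \<in> carrier YD \<Longrightarrow> phiof (f \<odot>\<^bsub>YD\<^esub> \<chi>) = q f \<odot>\<^bsub>MD\<^esub> phiof \<chi>"
  unfolding phiof_def dual_smult[of R M]
proof (rule restrict_ext)
  fix x assume x: "x \<in> carrier M"
  note wy = w_Y[OF x]
  show "\<iota> ((f \<odot>\<^bsub>YD\<^esub> \<chi>) (N \<odot>\<^bsub>MDD\<^esub> ev x)) = q f \<otimes>\<^bsub>R\<^esub> (\<lambda>x\<in>carrier M. \<iota> (\<chi> (N \<odot>\<^bsub>MDD\<^esub> ev x))) x"
    using x wy by (simp only: dual_smult[of S] restrict_apply' q_iota)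
qed

lemma alpha_YD: "\<phi> \<in> carrier MD \<Longrightarrow> alpha \<phi> \<in> carrier YD"
proof -
  assume p: "\<phi> \<in> carrier MD"
  show ?thesis unfolding dual_carrier
  proof (rule linear_formI)
    show "\<And>y. y \<in> carrier Y \<Longrightarrow> alpha \<phi> y \<in> carrier S" by (simp add: alpha_def kappa_carrier)
    show "alpha \<phi> \<in> extensional (carrier Y)" by (simp add: alpha_def)
  next
    fix y y' assume y: "y \<in> carrier Y" and y': "y' \<in> carrier Y"
    have yy: "y \<oplus>\<^bsub>Y\<^esub> y' \<in> carrier Y" by (rule closedmodD1[OF Y_closed y y'])
    show "alpha \<phi> (y \<oplus>\<^bsub>Y\<^esub> y') = alpha \<phi> y \<oplus>\<^bsub>S\<^esub> alpha \<phi> y'"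
      using yy y y' p by (simp add: alpha_def inv_add dual_add kappa_add)
  next
    fix f y assume f: "f \<in> carrier S" and y: "y \<in> carrier Y"
    have fy: "f \<odot>\<^bsub>Y\<^esub> y \<in> carrier Y" by (rule closedmodD2[OF Y_closed f y])
    show "alpha \<phi> (f \<odot>\<^bsub>Y\<^esub> y) = f \<otimes>\<^bsub>S\<^esub> alpha \<phi> y"
      using fy y p by (simp add: alpha_def inv_smult dual_smult kappa_q Y_pt)
  qed
qed

lemma alpha_add: "\<phi> \<in> carrier MD \<Longrightarrow> \<phi>' \<in> carrier MD \<Longrightarrow> alpha (\<phi> \<oplus>\<^bsub>MD\<^esub> \<phi>') = alpha \<phi> \<oplus>\<^bsub>YD\<^esub> alpha \<phi>'"
proof -
  assume p: "\<phi> \<in> carrier MD" and p': "\<phi>' \<in> carrier MD"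
  show ?thesis unfolding alpha_def dual_add[of S]
  proof (rule restrict_ext)
    fix y assume y: "y \<in> carrier Y"
    show "\<kappa> (y (\<phi> \<oplus>\<^bsub>MD\<^esub> \<phi>')) = (\<lambda>y\<in>carrier Y. \<kappa> (y \<phi>)) y \<oplus>\<^bsub>S\<^esub> (\<lambda>y\<in>carrier Y. \<kappa> (y \<phi>')) y"
      using y lf_add[OF Y_lf[OF y] p p'] by (simp add: kappa_add)
  qed
qed

lemma alpha_smult: "r \<in> carrier R \<Longrightarrow> \<phi> \<in> carrier MD \<Longrightarrow> alpha (r \<odot>\<^bsub>MD\<^esub> \<phi>) = \<pi> r \<odot>\<^bsub>YD\<^esub> alpha \<phi>"
proof -
  assume r: "r \<in> carrier R" and p: "\<phi> \<in> carrier MD"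
  show ?thesis unfolding alpha_def dual_smult[of S]
  proof (rule restrict_ext)
    fix y assume y: "y \<in> carrier Y"
    show "\<kappa> (y (r \<odot>\<^bsub>MD\<^esub> \<phi>)) = \<pi> r \<otimes>\<^bsub>S\<^esub> (\<lambda>y\<in>carrier Y. \<kappa> (y \<phi>)) y"
      using y r lf_smult[OF Y_lf[OF y] r p] by (simp add: kappa_r Y_pt[OF y p])
  qed
qed

lemma phiof_alpha: "\<phi> \<in> carrier MD \<Longrightarrow> phiof (alpha \<phi>) = N \<odot>\<^bsub>MD\<^esub> \<phi>"
proof -
  assume p: "\<phi> \<in> carrier MD"
  show ?thesis unfolding dual_smult[of R M]
  proof
    fix x show "phiof (alpha \<phi>) x = (\<lambda>x\<in>carrier M. N \<otimes>\<^bsub>R\<^esub> \<phi> x) x"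
    proof (cases "x \<in> carrier M")
      case True
      have "phiof (alpha \<phi>) x = \<iota> (\<kappa> ((N \<odot>\<^bsub>MDD\<^esub> ev x) \<phi>))"
        using True w_Y[OF True] by (simp add: phiof_def alpha_def)
      also have "\<dots> = N \<otimes>\<^bsub>R\<^esub> \<phi> x"
        using True p lf_val[OF MD_lf[OF p] True] by (simp add: w_eq iota_kappa hinv_N)
      finally show ?thesis using True by simp
    qed (simp add: phiof_def)
  qed
qed

end

lemma tuples_mem: "xs \<in> tuples D s \<longleftrightarrow> length xs = s \<and> set xs \<subseteq> carrier D"
  by (simp add: tuples_def)

lemma tuples_nth: "xs \<in> tuples D s \<Longrightarrow> i < s \<Longrightarrow> xs ! i \<in> carrier D"
  by (auto simp: tuples_def)

lemma tuples_update: "xs \<in> tuples D s \<Longrightarrow> y \<in> carrier D \<Longrightarrow> xs[i := y] \<in> tuples D s"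
  by (auto simp: tuples_def dest: subsetD[OF set_update_subset_insert])

lemma tuples_map: "xs \<in> tuples D s \<Longrightarrow> (\<And>x. x \<in> carrier D \<Longrightarrow> f x \<in> carrier E) \<Longrightarrow> map f xs \<in> tuples E s"
  by (auto simp: tuples_def)

lemma am_add: "alt_multilinear R D s \<Phi> \<Longrightarrow> xs \<in> tuples D s \<Longrightarrow> i < s \<Longrightarrow> y \<in> carrier D \<Longrightarrow>
   \<Phi> (xs[i := (xs!i) \<oplus>\<^bsub>D\<^esub> y]) = \<Phi> xs \<oplus>\<^bsub>R\<^esub> \<Phi> (xs[i := y])"
  by (simp add: alt_multilinear_def)
lemma am_smult: "alt_multilinear R D s \<Phi> \<Longrightarrow> xs \<in> tuples D s \<Longrightarrow> i < s \<Longrightarrow> r \<in> carrier R \<Longrightarrow>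
   \<Phi> (xs[i := r \<odot>\<^bsub>D\<^esub> (xs!i)]) = r \<otimes>\<^bsub>R\<^esub> \<Phi> xs"
  by (simp add: alt_multilinear_def)
lemma am_alt: "alt_multilinear R D s \<Phi> \<Longrightarrow> xs \<in> tuples D s \<Longrightarrow> i < s \<Longrightarrow> j < s \<Longrightarrow> i \<noteq> j \<Longrightarrow> xs!i = xs!j \<Longrightarrow>
   \<Phi> xs = \<zero>\<^bsub>R\<^esub>"
  by (simp add: alt_multilinear_def)
lemma am_val: "alt_multilinear R D s \<Phi> \<Longrightarrow> xs \<in> tuples D s \<Longrightarrow> \<Phi> xs \<in> carrier R"
  by (auto simp: alt_multilinear_def)
lemma am_ext: "alt_multilinear R D s \<Phi> \<Longrightarrow> xs \<notin> tuples D s \<Longrightarrow> \<Phi> xs = undefined"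
  by (auto simp: alt_multilinear_def extensional_def)

lemma am_scale:
  assumes R: "cring R" and D: "closedmod R D" and P: "alt_multilinear R D s \<Phi>"
    and c: "c \<in> carrier R" and xs: "xs \<in> tuples D s"
  shows "\<Phi> (map (\<lambda>x. c \<odot>\<^bsub>D\<^esub> x) xs) = c [^]\<^bsub>R\<^esub> s \<otimes>\<^bsub>R\<^esub> \<Phi> xs"
proof -
  interpret cring R by (rule R)
  define ys where "ys k = map (\<lambda>j. if j < k then c \<odot>\<^bsub>D\<^esub> (xs!j) else xs!j) [0..<s]" for k
  have len: "length xs = s" using xs by (simp add: tuples_def)
  have ysT: "ys k \<in> tuples D s" for k
    unfolding ys_def tuples_mem using closedmodD2[OF D c] tuples_nth[OF xs] by auto
  have ys0: "ys 0 = xs" unfolding ys_def using len map_nth[of xs] by simp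
  have yss: "ys s = map (\<lambda>x. c \<odot>\<^bsub>D\<^esub> x) xs" unfolding ys_def using len
    by (simp add: list_eq_iff_nth_eq)
  have ysS: "ys (Suc k) = (ys k)[k := c \<odot>\<^bsub>D\<^esub> ((ys k)!k)]" if k: "k < s" for k
    unfolding ys_def using k by (auto simp: list_eq_iff_nth_eq nth_list_update)
  have "k \<le> s \<Longrightarrow> \<Phi> (ys k) = c [^]\<^bsub>R\<^esub> k \<otimes>\<^bsub>R\<^esub> \<Phi> xs" for k
  proof (induction k)
    case 0 then show ?case using ys0 am_val[OF P xs] by simp
  next
    case (Suc k)
    then have k: "k < s" by simp
    have "\<Phi> (ys (Suc k)) = c \<otimes>\<^bsub>R\<^esub> \<Phi> (ys k)" using ysS[OF k] am_smult[OF P ysT k c] by simp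
    also have "\<dots> = c \<otimes>\<^bsub>R\<^esub> (c [^]\<^bsub>R\<^esub> k \<otimes>\<^bsub>R\<^esub> \<Phi> xs)" using Suc k by simp
    also have "\<dots> = c [^]\<^bsub>R\<^esub> Suc k \<otimes>\<^bsub>R\<^esub> \<Phi> xs" using c am_val[OF P xs] by (simp add: m_ac)
    finally show ?case .
  qed
  then show ?thesis using yss by (metis order_refl)
qed

context msetup begin

definition "cH = scal (int (card H)) \<one>\<^bsub>S\<^esub>"

lemma cH_carrier: "cH \<in> carrier S"
proof -
  interpret Sc: cring S by (rule S_cring)
  show ?thesis unfolding cH_def by (rule scal_carrier) simp
qed

lemma cH_pow: "f \<in> carrier S \<Longrightarrow> cH [^]\<^bsub>S\<^esub> (n::nat) \<otimes>\<^bsub>S\<^esub> f = scal (int (card H) ^ n) f"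
proof (induction n arbitrary: f)
  interpret Sc: cring S by (rule S_cring)
  case 0 then show ?case by (simp add: scal_1)
next
  interpret Sc: cring S by (rule S_cring)
  case (Suc n)
  have "cH [^]\<^bsub>S\<^esub> Suc n \<otimes>\<^bsub>S\<^esub> f = cH [^]\<^bsub>S\<^esub> n \<otimes>\<^bsub>S\<^esub> (cH \<otimes>\<^bsub>S\<^esub> f)"
    using Suc.prems cH_carrier by (simp add: Sc.m_assoc)
  also have "\<dots> = cH [^]\<^bsub>S\<^esub> n \<otimes>\<^bsub>S\<^esub> scal (int (card H)) f"
    using Suc.prems by (simp add: cH_def S_one_scal)
  also have "\<dots> = scal (int (card H) ^ n) (scal (int (card H)) f)"
    using Suc.IH[OF scal_carrier[OF Suc.prems]] .
  finally show ?case by (simp add: scal_scal mult.commute)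
qed

lemma N_pow: "hinv G H a \<Longrightarrow> N [^]\<^bsub>R\<^esub> (n::nat) \<otimes>\<^bsub>R\<^esub> a = scal (int (card H) ^ n) a"
proof (induction n arbitrary: a)
  interpret Rc: cring R by (rule R_cring)
  case 0 then show ?case by (simp add: scal_1 hinv_def)
next
  interpret Rc: cring R by (rule R_cring)
  case (Suc n)
  have aR: "a \<in> carrier R" using Suc.prems by (simp add: hinv_def)
  have "N [^]\<^bsub>R\<^esub> Suc n \<otimes>\<^bsub>R\<^esub> a = N [^]\<^bsub>R\<^esub> n \<otimes>\<^bsub>R\<^esub> (N \<otimes>\<^bsub>R\<^esub> a)"
    using aR N_carrier by (simp add: Rc.m_assoc)
  also have "\<dots> = N [^]\<^bsub>R\<^esub> n \<otimes>\<^bsub>R\<^esub> scal (int (card H)) a"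
    using Suc.prems by (simp add: N_hinv)
  also have "\<dots> = scal (int (card H) ^ n) (scal (int (card H)) a)"
    using Suc.IH[OF hinv_scal[OF Suc.prems]] .
  finally show ?case by (simp add: scal_scal mult.commute)
qed

lemma K: "\<chi> \<in> carrier YD \<Longrightarrow> alpha (phiof \<chi>) = cH \<odot>\<^bsub>YD\<^esub> \<chi>"
proof -
  assume c: "\<chi> \<in> carrier YD"
  note cl = YD_lf[OF c]
  have pm: "phiof \<chi> \<in> carrier MD" by (rule phiof_MD[OF c])
  show ?thesis unfolding alpha_def dual_smult[of S Y]
  proof (rule restrict_ext)
    fix y assume y: "y \<in> carrier Y"
    obtain k x where k: "k \<noteq> 0" and x: "x \<in> carrier M" and kx: "\<And>\<psi>. \<psi> \<in> carrier MD \<Longrightarrow> \<psi> x = scal k (y \<psi>)"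
      using star[OF Y_sub[OF y]] by blast
    define m where "m = k * int (card H)"
    have cy: "\<chi> y \<in> carrier S" by (rule lf_val[OF cl y])
    have step1: "N \<odot>\<^bsub>MDD\<^esub> ev x = scal m \<one>\<^bsub>S\<^esub> \<odot>\<^bsub>Y\<^esub> y"
      unfolding inv_smult dual_smult[of R MD]
    proof (rule restrict_ext)
      fix \<psi> assume p: "\<psi> \<in> carrier MD"
      have "N \<otimes>\<^bsub>R\<^esub> ev x \<psi> = scal m (y \<psi>)"
        using p kx[OF p] by (simp add: ev_app scal_mult_right N_hinv Y_pt[OF y p] scal_scal m_def mult.commute)
      also have "\<dots> = q (scal m \<one>\<^bsub>S\<^esub>) \<otimes>\<^bsub>R\<^esub> y \<psi>" by (simp add: q_scal_one Y_pt[OF y p])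
      finally show "N \<otimes>\<^bsub>R\<^esub> ev x \<psi> = q (scal m \<one>\<^bsub>S\<^esub>) \<otimes>\<^bsub>R\<^esub> y \<psi>" .
    qed
    have sm: "scal m \<one>\<^bsub>S\<^esub> \<in> carrier S"
    proof -
      interpret Sc: cring S by (rule S_cring)
      show ?thesis by (rule scal_carrier) simp
    qed
    have "phiof \<chi> x = \<iota> (\<chi> (scal m \<one>\<^bsub>S\<^esub> \<odot>\<^bsub>Y\<^esub> y))" using x step1 by (simp add: phiof_def)
    also have "\<dots> = scal m (\<iota> (\<chi> y))" using lf_smult[OF cl sm y] by (simp add: S_one_scal cy iota_scal)
    finally have "scal k (y (phiof \<chi>)) = scal k (scal (int (card H)) (\<iota> (\<chi> y)))"
      using kx[OF pm] by (simp add: scal_scal m_def)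
    then have "y (phiof \<chi>) = scal (int (card H)) (\<iota> (\<chi> y))" using k scal_inj by blast
    then show "\<kappa> (y (phiof \<chi>)) = cH \<otimes>\<^bsub>S\<^esub> \<chi> y"
      by (simp add: kappa_scal kappa_iota cy cH_def S_one_scal)
  qed
qed

end

context msetup begin

definition "Phi s \<Psi> = (\<lambda>\<phi>s\<in>tuples MD s. \<iota> (\<Psi> (map alpha \<phi>s)))"

lemma map_alpha_T: "\<phi>s \<in> tuples MD s \<Longrightarrow> map alpha \<phi>s \<in> tuples YD s"
  using tuples_map[of \<phi>s MD s alpha YD] alpha_YD by blast

lemma map_phiof_T: "\<chi>s \<in> tuples YD s \<Longrightarrow> map phiof \<chi>s \<in> tuples MD s"
  using tuples_map[of \<chi>s YD s phiof MD] phiof_MD by blast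

lemma tuples_len: "xs \<in> tuples D s \<Longrightarrow> length xs = s" by (simp add: tuples_def)

lemma Phi_B:
  assumes P: "\<Psi> \<in> carrier (alt_dual S YD s)"
  shows "Phi s \<Psi> \<in> carrier (invariants G H (alt_dual R MD s))"
proof -
  have PA: "alt_multilinear S YD s \<Psi>" using P by (simp add: ad_carrier)
  have am: "alt_multilinear R MD s (Phi s \<Psi>)"
    unfolding alt_multilinear_def
  proof (intro conjI ballI allI impI)
    show "Phi s \<Psi> \<in> tuples MD s \<rightarrow> carrier R" by (simp add: Phi_def iota_carrier)
    show "Phi s \<Psi> \<in> extensional (tuples MD s)" by (simp add: Phi_def)
  next
    fix xs i y assume xs: "xs \<in> tuples MD s" and i: "i < s" and y: "y \<in> carrier MD"
    have xi: "xs ! i \<in> carrier MD" by (rule tuples_nth[OF xs i])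
    have t1: "xs[i := xs ! i \<oplus>\<^bsub>MD\<^esub> y] \<in> tuples MD s" by (rule tuples_update[OF xs closedmodD1[OF MD_closed xi y]])
    have t2: "xs[i := y] \<in> tuples MD s" by (rule tuples_update[OF xs y])
    have li: "i < length xs" using xs i by (simp add: tuples_len)
    have "map alpha (xs[i := xs ! i \<oplus>\<^bsub>MD\<^esub> y]) = (map alpha xs)[i := (map alpha xs) ! i \<oplus>\<^bsub>YD\<^esub> alpha y]"
      using li xi y by (simp add: map_update alpha_add)
    then have "\<Psi> (map alpha (xs[i := xs ! i \<oplus>\<^bsub>MD\<^esub> y])) = \<Psi> (map alpha xs) \<oplus>\<^bsub>S\<^esub> \<Psi> (map alpha (xs[i := y]))"
      using am_add[OF PA map_alpha_T[OF xs] i alpha_YD[OF y]] by (simp add: map_update)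
    then show "Phi s \<Psi> (xs[i := xs ! i \<oplus>\<^bsub>MD\<^esub> y]) = Phi s \<Psi> xs \<oplus>\<^bsub>R\<^esub> Phi s \<Psi> (xs[i := y])"
      using t1 t2 xs by (simp add: Phi_def iota_add)
  next
    fix xs i r assume xs: "xs \<in> tuples MD s" and i: "i < s" and r: "r \<in> carrier R"
    have xi: "xs ! i \<in> carrier MD" by (rule tuples_nth[OF xs i])
    have t1: "xs[i := r \<odot>\<^bsub>MD\<^esub> xs ! i] \<in> tuples MD s" by (rule tuples_update[OF xs closedmodD2[OF MD_closed r xi]])
    have li: "i < length xs" using xs i by (simp add: tuples_len)
    have "map alpha (xs[i := r \<odot>\<^bsub>MD\<^esub> xs ! i]) = (map alpha xs)[i := \<pi> r \<odot>\<^bsub>YD\<^esub> (map alpha xs) ! i]"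
      using li xi r by (simp add: map_update alpha_smult)
    then have "\<Psi> (map alpha (xs[i := r \<odot>\<^bsub>MD\<^esub> xs ! i])) = \<pi> r \<otimes>\<^bsub>S\<^esub> \<Psi> (map alpha xs)"
      using am_smult[OF PA map_alpha_T[OF xs] i proj_carrier] by simp
    then show "Phi s \<Psi> (xs[i := r \<odot>\<^bsub>MD\<^esub> xs ! i]) = r \<otimes>\<^bsub>R\<^esub> Phi s \<Psi> xs"
      using t1 xs r am_val[OF PA map_alpha_T[OF xs]] by (simp add: Phi_def proj_iota)
  next
    fix xs i j assume xs: "xs \<in> tuples MD s" and i: "i < s" and j: "j < s" and ij: "i \<noteq> j \<and> xs ! i = xs ! j"
    have "map alpha xs ! i = map alpha xs ! j" using ij i j xs by (simp add: tuples_len)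
    then have "\<Psi> (map alpha xs) = \<zero>\<^bsub>S\<^esub>" using am_alt[OF PA map_alpha_T[OF xs] i j] ij by simp
    then show "Phi s \<Psi> xs = \<zero>\<^bsub>R\<^esub>" using xs by (simp add: Phi_def iota_zero)
  qed
  have inv: "gr_elem G h \<odot>\<^bsub>alt_dual R MD s\<^esub> Phi s \<Psi> = Phi s \<Psi>" if h: "h \<in> H" for h
    unfolding ad_smult Phi_def
    by (rule restrict_ext) (use h iota_hinv in \<open>simp add: hinv_def\<close>)
  show ?thesis using am inv by (simp add: inv_carrier ad_carrier)
qed

lemma Phi_add:
  assumes P: "\<Psi> \<in> carrier (alt_dual S YD s)" and P': "\<Psi>' \<in> carrier (alt_dual S YD s)"
  shows "Phi s (\<Psi> \<oplus>\<^bsub>alt_dual S YD s\<^esub> \<Psi>') = Phi s \<Psi> \<oplus>\<^bsub>invariants G H (alt_dual R MD s)\<^esub> Phi s \<Psi>'"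
  unfolding inv_add ad_add Phi_def
  by (rule restrict_ext) (simp add: map_alpha_T iota_add)

lemma Phi_smult:
  assumes f: "f \<in> carrier S"
  shows "Phi s (f \<odot>\<^bsub>alt_dual S YD s\<^esub> \<Psi>) = f \<odot>\<^bsub>invariants G H (alt_dual R MD s)\<^esub> Phi s \<Psi>"
  unfolding inv_smult ad_smult Phi_def
  by (rule restrict_ext) (simp add: map_alpha_T q_iota)

lemma map_alpha_phiof: "\<chi>s \<in> tuples YD s \<Longrightarrow> map (\<lambda>\<chi>. alpha (phiof \<chi>)) \<chi>s = map (\<lambda>\<chi>. cH \<odot>\<^bsub>YD\<^esub> \<chi>) \<chi>s"
  by (auto simp: tuples_def K)

lemma YD_closed: "closedmod S YD" by (rule dual_closed[OF S_cring Y_closed])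

lemma Phi_inj:
  assumes P: "\<Psi> \<in> carrier (alt_dual S YD s)" and P': "\<Psi>' \<in> carrier (alt_dual S YD s)"
    and eq: "Phi s \<Psi> = Phi s \<Psi>'"
  shows "\<Psi> = \<Psi>'"
proof
  fix \<chi>s
  have PA: "alt_multilinear S YD s \<Psi>" using P by (simp add: ad_carrier)
  have PA': "alt_multilinear S YD s \<Psi>'" using P' by (simp add: ad_carrier)
  show "\<Psi> \<chi>s = \<Psi>' \<chi>s"
  proof (cases "\<chi>s \<in> tuples YD s")
    case True
    have "Phi s \<Psi> (map phiof \<chi>s) = \<iota> (scal (int (card H) ^ s) (\<Psi> \<chi>s))"
      using True map_phiof_T[OF True]
      by (simp add: Phi_def o_def map_alpha_phiof am_scale[OF S_cring YD_closed PA cH_carrier True]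
            cH_pow am_val[OF PA True])
    moreover have "Phi s \<Psi>' (map phiof \<chi>s) = \<iota> (scal (int (card H) ^ s) (\<Psi>' \<chi>s))"
      using True map_phiof_T[OF True]
      by (simp add: Phi_def o_def map_alpha_phiof am_scale[OF S_cring YD_closed PA' cH_carrier True]
            cH_pow am_val[OF PA' True])
    ultimately have "scal (int (card H) ^ s) (\<Psi> \<chi>s) = scal (int (card H) ^ s) (\<Psi>' \<chi>s)"
      using eq iota_inj scal_carrier am_val[OF PA True] am_val[OF PA' True] by metis
    moreover have "int (card H) ^ s \<noteq> 0" using cardH by simp
    ultimately show ?thesis using scal_inj by blast
  next
    case False then show ?thesis using am_ext[OF PA] am_ext[OF PA'] by simp
  qed
qed

end

context msetup begin

lemma B_facts:
  assumes T: "\<Theta> \<in> carrier (invariants G H (alt_dual R MD s))"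
  shows "alt_multilinear R MD s \<Theta>" and "\<And>\<phi>s. \<phi>s \<in> tuples MD s \<Longrightarrow> hinv G H (\<Theta> \<phi>s)"
proof -
  show A: "alt_multilinear R MD s \<Theta>" using T by (simp add: inv_carrier ad_carrier)
  fix \<phi>s assume p: "\<phi>s \<in> tuples MD s"
  have "gr_elem G h \<otimes>\<^bsub>R\<^esub> \<Theta> \<phi>s = \<Theta> \<phi>s" if h: "h \<in> H" for h
  proof -
    have "gr_elem G h \<odot>\<^bsub>alt_dual R MD s\<^esub> \<Theta> = \<Theta>" using T h by (simp add: inv_carrier)
    then have "(gr_elem G h \<odot>\<^bsub>alt_dual R MD s\<^esub> \<Theta>) \<phi>s = \<Theta> \<phi>s" by simp
    then show ?thesis using p by (simp add: ad_smult)
  qed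
  then show "hinv G H (\<Theta> \<phi>s)" using am_val[OF A p] by (simp add: hinv_def)
qed

lemma divis:
  assumes ThA: "alt_multilinear R MD s \<Theta>" and Thh: "\<And>\<phi>s. \<phi>s \<in> tuples MD s \<Longrightarrow> hinv G H (\<Theta> \<phi>s)"
  shows "k \<le> s \<Longrightarrow> length cs = k \<Longrightarrow> set cs \<subseteq> carrier YD \<Longrightarrow> ps \<in> tuples MD (s - k) \<Longrightarrow>
    \<exists>f. hinv G H f \<and> \<Theta> (map phiof cs @ ps) = scal (int (card H) ^ k) f"
proof (induction k arbitrary: cs ps)
  case 0
  then show ?case using Thh[of ps] by (auto simp: scal_1)
next
  case (Suc k)
  interpret Rc: cring R by (rule R_cring)
  obtain cs' \<chi> where cs: "cs = cs' @ [\<chi>]" and lcs': "length cs' = k"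
    using Suc.prems(2) by (metis length_Suc_conv_rev)
  have \<chi>: "\<chi> \<in> carrier YD" using Suc.prems(3) cs by simp
  have cs'Y: "set cs' \<subseteq> carrier YD" using Suc.prems(3) cs by simp
  define m where "m = int (card H) ^ k"
  have m0: "m \<noteq> 0" using cardH by (simp add: m_def)
  define L where "L \<phi> = map phiof cs' @ \<phi> # ps" for \<phi>
  have psT: "ps \<in> tuples MD (s - Suc k)" using Suc.prems(4) .
  have LT: "L \<phi> \<in> tuples MD s" if p: "\<phi> \<in> carrier MD" for \<phi>
    using psT p cs'Y phiof_MD lcs' Suc.prems(1) by (auto simp: L_def tuples_def)
  have LT': "\<phi> # ps \<in> tuples MD (s - k)" if p: "\<phi> \<in> carrier MD" for \<phi>
    using psT p Suc.prems(1) by (auto simp: tuples_def)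
  have ks: "k < s" using Suc.prems(1) by simp
  have Lk: "L \<phi> ! k = \<phi>" for \<phi> using lcs' by (simp add: L_def nth_append)
  have Lu: "(L \<phi>)[k := z] = L z" for \<phi> z using lcs' by (simp add: L_def list_update_append)
  have ex: "\<exists>f. hinv G H f \<and> \<Theta> (L \<phi>) = scal m f" if p: "\<phi> \<in> carrier MD" for \<phi>
    using Suc.IH[OF _ lcs' cs'Y LT'[OF p]] Suc.prems(1) by (simp add: L_def m_def)
  define quo where "quo \<phi> = (THE f. \<Theta> (L \<phi>) = scal m f)" for \<phi>
  have quo: "hinv G H (quo \<phi>) \<and> \<Theta> (L \<phi>) = scal m (quo \<phi>)" if p: "\<phi> \<in> carrier MD" for \<phi>
  proof -
    obtain f where f: "hinv G H f" "\<Theta> (L \<phi>) = scal m f" using ex[OF p] by blast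
    have "quo \<phi> = f" unfolding quo_def
      by (rule the_equality) (use f scal_inj[OF m0] in auto)
    then show ?thesis using f by simp
  qed
  have quo_eq: "\<Theta> (L \<phi>) = scal m g \<Longrightarrow> quo \<phi> = g" if p: "\<phi> \<in> carrier MD" for \<phi> g
    using quo[OF p] scal_inj[OF m0] by metis
  define y where "y = (\<lambda>\<phi>\<in>carrier MD. quo \<phi>)"
  have yMDD: "y \<in> carrier MDD" unfolding dual_carrier
  proof (rule linear_formI)
    fix \<phi> assume "\<phi> \<in> carrier MD" then show "y \<phi> \<in> carrier R" using quo by (simp add: y_def hinv_def)
  next
    show "y \<in> extensional (carrier MD)" by (simp add: y_def)
  next
    fix \<phi> \<phi>' assume p: "\<phi> \<in> carrier MD" and p': "\<phi>' \<in> carrier MD"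
    have pp: "\<phi> \<oplus>\<^bsub>MD\<^esub> \<phi>' \<in> carrier MD" by (rule closedmodD1[OF MD_closed p p'])
    have "\<Theta> (L (\<phi> \<oplus>\<^bsub>MD\<^esub> \<phi>')) = \<Theta> (L \<phi>) \<oplus>\<^bsub>R\<^esub> \<Theta> (L \<phi>')"
      using am_add[OF ThA LT[OF p] ks p'] by (simp add: Lk Lu)
    also have "\<dots> = scal m (quo \<phi> \<oplus>\<^bsub>R\<^esub> quo \<phi>')" using quo[OF p] quo[OF p'] by (simp add: scal_add)
    finally have "quo (\<phi> \<oplus>\<^bsub>MD\<^esub> \<phi>') = quo \<phi> \<oplus>\<^bsub>R\<^esub> quo \<phi>'" by (rule quo_eq[OF pp])
    then show "y (\<phi> \<oplus>\<^bsub>MD\<^esub> \<phi>') = y \<phi> \<oplus>\<^bsub>R\<^esub> y \<phi>'" using p p' pp by (simp add: y_def)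
  next
    fix r \<phi> assume r: "r \<in> carrier R" and p: "\<phi> \<in> carrier MD"
    have rp: "r \<odot>\<^bsub>MD\<^esub> \<phi> \<in> carrier MD" by (rule closedmodD2[OF MD_closed r p])
    have "\<Theta> (L (r \<odot>\<^bsub>MD\<^esub> \<phi>)) = r \<otimes>\<^bsub>R\<^esub> \<Theta> (L \<phi>)"
      using am_smult[OF ThA LT[OF p] ks r] by (simp add: Lk Lu)
    also have "\<dots> = scal m (r \<otimes>\<^bsub>R\<^esub> quo \<phi>)" using quo[OF p] by (simp add: scal_mult_right)
    finally have "quo (r \<odot>\<^bsub>MD\<^esub> \<phi>) = r \<otimes>\<^bsub>R\<^esub> quo \<phi>" by (rule quo_eq[OF rp])
    then show "y (r \<odot>\<^bsub>MD\<^esub> \<phi>) = r \<otimes>\<^bsub>R\<^esub> y \<phi>" using p rp by (simp add: y_def)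
  qed
  have yY: "y \<in> carrier Y"
    by (rule Y_intro[OF yMDD]) (simp add: y_def quo)
  have pc: "phiof \<chi> \<in> carrier MD" by (rule phiof_MD[OF \<chi>])
  have cy: "\<chi> y \<in> carrier S" by (rule lf_val[OF YD_lf[OF \<chi>] yY])
  have "y (phiof \<chi>) = \<iota> (\<kappa> (y (phiof \<chi>)))" using quo[OF pc] pc by (simp add: y_def iota_kappa)
  also have "\<dots> = \<iota> (alpha (phiof \<chi>) y)" using yY by (simp add: alpha_def)
  also have "\<dots> = \<iota> (cH \<otimes>\<^bsub>S\<^esub> \<chi> y)" using yY by (simp add: K[OF \<chi>] dual_smult)
  also have "\<dots> = scal (int (card H)) (\<iota> (\<chi> y))" using cy by (simp add: cH_def S_one_scal iota_scal)
  finally have yv: "y (phiof \<chi>) = scal (int (card H)) (\<iota> (\<chi> y))" .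
  have "\<Theta> (map phiof cs @ ps) = \<Theta> (L (phiof \<chi>))" by (simp add: cs L_def)
  also have "\<dots> = scal m (y (phiof \<chi>))" using quo[OF pc] pc by (simp add: y_def)
  also have "\<dots> = scal (int (card H) ^ Suc k) (\<iota> (\<chi> y))" by (simp add: yv scal_scal m_def mult.commute)
  finally show ?case using iota_hinv by blast
qed

lemma Phi_surj:
  assumes T: "\<Theta> \<in> carrier (invariants G H (alt_dual R MD s))"
  shows "\<exists>\<Psi>\<in>carrier (alt_dual S YD s). Phi s \<Psi> = \<Theta>"
proof -
  interpret Rc: cring R by (rule R_cring)
  note ThA = B_facts(1)[OF T] and Thh = B_facts(2)[OF T]
  define m where "m = int (card H) ^ s"
  have m0: "m \<noteq> 0" using cardH by (simp add: m_def)
  define Q where "Q \<chi>s = (THE f. \<Theta> (map phiof \<chi>s) = scal m f)" for \<chi>s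
  have Q: "hinv G H (Q \<chi>s) \<and> \<Theta> (map phiof \<chi>s) = scal m (Q \<chi>s)" if c: "\<chi>s \<in> tuples YD s" for \<chi>s
  proof -
    obtain f where f: "hinv G H f" "\<Theta> (map phiof \<chi>s @ []) = scal m f"
      using divis[OF ThA Thh, of s \<chi>s "[]"] c by (auto simp: tuples_def m_def)
    have "Q \<chi>s = f" unfolding Q_def
      by (rule the_equality) (use f scal_inj[OF m0] in auto)
    then show ?thesis using f by simp
  qed
  have Q_eq: "\<Theta> (map phiof \<chi>s) = scal m g \<Longrightarrow> Q \<chi>s = g" if c: "\<chi>s \<in> tuples YD s" for \<chi>s g
    using Q[OF c] scal_inj[OF m0] by metis
  define \<Psi> where "\<Psi> = (\<lambda>\<chi>s\<in>tuples YD s. \<kappa> (Q \<chi>s))"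
  have PA: "alt_multilinear S YD s \<Psi>"
    unfolding alt_multilinear_def
  proof (intro conjI ballI allI impI)
    show "\<Psi> \<in> tuples YD s \<rightarrow> carrier S" by (simp add: \<Psi>_def kappa_carrier)
    show "\<Psi> \<in> extensional (tuples YD s)" by (simp add: \<Psi>_def)
  next
    fix xs i y assume xs: "xs \<in> tuples YD s" and i: "i < s" and y: "y \<in> carrier YD"
    have xi: "xs ! i \<in> carrier YD" by (rule tuples_nth[OF xs i])
    have t1: "xs[i := xs ! i \<oplus>\<^bsub>YD\<^esub> y] \<in> tuples YD s" by (rule tuples_update[OF xs closedmodD1[OF YD_closed xi y]])
    have t2: "xs[i := y] \<in> tuples YD s" by (rule tuples_update[OF xs y])
    have li: "i < length xs" using xs i by (simp add: tuples_len)
    have "map phiof (xs[i := xs ! i \<oplus>\<^bsub>YD\<^esub> y]) = (map phiof xs)[i := (map phiof xs) ! i \<oplus>\<^bsub>MD\<^esub> phiof y]"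
      using li xi y by (simp add: map_update phiof_add)
    then have "\<Theta> (map phiof (xs[i := xs ! i \<oplus>\<^bsub>YD\<^esub> y])) = \<Theta> (map phiof xs) \<oplus>\<^bsub>R\<^esub> \<Theta> (map phiof (xs[i := y]))"
      using am_add[OF ThA map_phiof_T[OF xs] i phiof_MD[OF y]] by (simp add: map_update)
    also have "\<dots> = scal m (Q xs \<oplus>\<^bsub>R\<^esub> Q (xs[i := y]))" using Q[OF xs] Q[OF t2] by (simp add: scal_add)
    finally have "Q (xs[i := xs ! i \<oplus>\<^bsub>YD\<^esub> y]) = Q xs \<oplus>\<^bsub>R\<^esub> Q (xs[i := y])" by (rule Q_eq[OF t1])
    then show "\<Psi> (xs[i := xs ! i \<oplus>\<^bsub>YD\<^esub> y]) = \<Psi> xs \<oplus>\<^bsub>S\<^esub> \<Psi> (xs[i := y])"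
      using t1 t2 xs by (simp add: \<Psi>_def kappa_add)
  next
    fix xs i f assume xs: "xs \<in> tuples YD s" and i: "i < s" and f: "f \<in> carrier S"
    have xi: "xs ! i \<in> carrier YD" by (rule tuples_nth[OF xs i])
    have t1: "xs[i := f \<odot>\<^bsub>YD\<^esub> xs ! i] \<in> tuples YD s" by (rule tuples_update[OF xs closedmodD2[OF YD_closed f xi]])
    have li: "i < length xs" using xs i by (simp add: tuples_len)
    have "map phiof (xs[i := f \<odot>\<^bsub>YD\<^esub> xs ! i]) = (map phiof xs)[i := q f \<odot>\<^bsub>MD\<^esub> (map phiof xs) ! i]"
      using li xi f by (simp add: map_update phiof_smult)
    then have "\<Theta> (map phiof (xs[i := f \<odot>\<^bsub>YD\<^esub> xs ! i])) = q f \<otimes>\<^bsub>R\<^esub> \<Theta> (map phiof xs)"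
      using am_smult[OF ThA map_phiof_T[OF xs] i q_carrier] by simp
    also have "\<dots> = scal m (q f \<otimes>\<^bsub>R\<^esub> Q xs)" using Q[OF xs] by (simp add: scal_mult_right)
    finally have "Q (xs[i := f \<odot>\<^bsub>YD\<^esub> xs ! i]) = q f \<otimes>\<^bsub>R\<^esub> Q xs" by (rule Q_eq[OF t1])
    then show "\<Psi> (xs[i := f \<odot>\<^bsub>YD\<^esub> xs ! i]) = f \<otimes>\<^bsub>S\<^esub> \<Psi> xs"
      using t1 xs Q[OF xs] by (simp add: \<Psi>_def kappa_q)
  next
    fix xs i j assume xs: "xs \<in> tuples YD s" and i: "i < s" and j: "j < s" and ij: "i \<noteq> j \<and> xs ! i = xs ! j"
    have "map phiof xs ! i = map phiof xs ! j" using ij i j xs by (simp add: tuples_len)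
    then have "\<Theta> (map phiof xs) = \<zero>\<^bsub>R\<^esub>" using am_alt[OF ThA map_phiof_T[OF xs] i j] ij by simp
    also have "\<dots> = scal m \<zero>\<^bsub>R\<^esub>" by (simp add: scal_def gr_zero)
    finally have "Q xs = \<zero>\<^bsub>R\<^esub>" by (rule Q_eq[OF xs])
    then show "\<Psi> xs = \<zero>\<^bsub>S\<^esub>" using xs by (simp add: \<Psi>_def kappa_zero)
  qed
  have "Phi s \<Psi> = \<Theta>"
  proof
    fix \<phi>s show "Phi s \<Psi> \<phi>s = \<Theta> \<phi>s"
    proof (cases "\<phi>s \<in> tuples MD s")
      case True
      have mT: "map alpha \<phi>s \<in> tuples YD s" by (rule map_alpha_T[OF True])
      have e: "map phiof (map alpha \<phi>s) = map (\<lambda>\<phi>. N \<odot>\<^bsub>MD\<^esub> \<phi>) \<phi>s"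
        unfolding map_map o_def using True by (auto simp: tuples_def phiof_alpha)
      have "\<Theta> (map phiof (map alpha \<phi>s)) = N [^]\<^bsub>R\<^esub> s \<otimes>\<^bsub>R\<^esub> \<Theta> \<phi>s"
        unfolding e by (rule am_scale[OF R_cring MD_closed ThA N_carrier True])
      also have "\<dots> = scal m (\<Theta> \<phi>s)" by (simp add: N_pow Thh[OF True] m_def)
      finally have "Q (map alpha \<phi>s) = \<Theta> \<phi>s" by (rule Q_eq[OF mT])
      then show ?thesis using True mT Q[OF mT] by (simp add: Phi_def \<Psi>_def iota_kappa)
    next
      case False then show ?thesis using am_ext[OF ThA] by (simp add: Phi_def)
    qed
  qed
  moreover have "\<Psi> \<in> carrier (alt_dual S YD s)" using PA by (simp add: ad_carrier)
  ultimately show ?thesis by blast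
qed

lemma Phi_iso: "module_iso S (alt_dual S YD s) (invariants G H (alt_dual R MD s)) (Phi s)"
  unfolding module_iso_def
proof (intro conjI ballI)
  show "bij_betw (Phi s) (carrier (alt_dual S YD s)) (carrier (invariants G H (alt_dual R MD s)))"
    unfolding bij_betw_def
  proof
    show "inj_on (Phi s) (carrier (alt_dual S YD s))" by (rule inj_onI) (rule Phi_inj)
    show "Phi s ` carrier (alt_dual S YD s) = carrier (invariants G H (alt_dual R MD s))"
      using Phi_B Phi_surj by blast
  qed
next
  fix x y assume "x \<in> carrier (alt_dual S YD s)" "y \<in> carrier (alt_dual S YD s)"
  then show "Phi s (x \<oplus>\<^bsub>alt_dual S YD s\<^esub> y) = Phi s x \<oplus>\<^bsub>invariants G H (alt_dual R MD s)\<^esub> Phi s y"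
    by (rule Phi_add)
next
  fix r x assume "r \<in> carrier S" "x \<in> carrier (alt_dual S YD s)"
  then show "Phi s (r \<odot>\<^bsub>alt_dual S YD s\<^esub> x) = r \<odot>\<^bsub>invariants G H (alt_dual R MD s)\<^esub> Phi s x"
    by (intro Phi_smult)
qed

end

lemma gr_det:
  assumes R: "cring (group_ring G)" and m: "\<And>i j. i < s \<Longrightarrow> j < s \<Longrightarrow> m i j \<in> carrier (group_ring G)"
  shows "ring_det (group_ring G) s m =
    (\<lambda>x. \<Sum>\<sigma>\<in>{\<sigma>. \<sigma> permutes {..<s}}. sign \<sigma> * finprod (group_ring G) (\<lambda>i. m i (\<sigma> i)) {..<s} x)"
proof -
  interpret cring "group_ring G" by (rule R)
  define P where "P = {\<sigma>. \<sigma> permutes {..<s}}"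
  have finP: "finite P" unfolding P_def by (rule finite_permutations) simp
  have fpc: "finprod (group_ring G) (\<lambda>i. m i (\<sigma> i)) {..<s} \<in> carrier (group_ring G)" if s: "\<sigma> \<in> P" for \<sigma>
  proof (rule finprod_closed)
    show "(\<lambda>i. m i (\<sigma> i)) \<in> {..<s} \<rightarrow> carrier (group_ring G)"
      using s m permutes_in_image[of \<sigma> "{..<s}"] by (auto simp: P_def)
  qed
  have "ring_det (group_ring G) s m = finsum (group_ring G) (\<lambda>\<sigma>. scal (sign \<sigma>) (finprod (group_ring G) (\<lambda>i. m i (\<sigma> i)) {..<s})) P"
    unfolding ring_det_def P_def[symmetric]
    by (rule finsum_cong') (simp_all add: fpc gr_int_pow[OF R] scal_carrier Pi_def)
  also have "\<dots> = (\<lambda>x. \<Sum>\<sigma>\<in>P. scal (sign \<sigma>) (finprod (group_ring G) (\<lambda>i. m i (\<sigma> i)) {..<s}) x)"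
    by (rule gr_finsum[OF R finP]) (simp add: fpc scal_carrier Pi_def)
  finally show ?thesis by (simp add: P_def scal_def)
qed

lemma ad_nat_pow: "[(n::nat)] \<cdot>\<^bsub>alt_dual (group_ring G) D s\<^esub> f = (\<lambda>\<phi>s\<in>tuples D s. scal (int n) (f \<phi>s))"
proof (induction n)
  case 0 show ?case by (simp add: gen_nat_pow ad_zero gr_zero scal_def)
next
  case (Suc n)
  have "[Suc n] \<cdot>\<^bsub>alt_dual (group_ring G) D s\<^esub> f = [n] \<cdot>\<^bsub>alt_dual (group_ring G) D s\<^esub> f \<oplus>\<^bsub>alt_dual (group_ring G) D s\<^esub> f"
    by (simp add: gen_nat_pow)
  then show ?case using Suc by (auto simp: ad_add gr_add scal_def distrib_right add.commute)
qed

context msetup begin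

lemma prod_iota:
  assumes b: "\<And>i. i < Suc n \<Longrightarrow> hinv G H (b i)"
  shows "scal (int (card H) ^ n) (\<iota> (finprod S (\<lambda>i. \<kappa> (b i)) {..<Suc n})) = finprod R b {..<Suc n}"
  using b
proof (induction n)
  interpret Rc: cring R by (rule R_cring)
  interpret Sc: cring S by (rule S_cring)
  case 0
  have b0: "b 0 \<in> carrier R" using 0 by (simp add: hinv_def)
  show ?case using 0 b0 by (simp add: lessThan_Suc kappa_carrier iota_kappa scal_1)
next
  interpret Rc: cring R by (rule R_cring)
  interpret Sc: cring S by (rule S_cring)
  case (Suc n)
  define P where "P = finprod S (\<lambda>i. \<kappa> (b i)) {..<Suc n}"
  have PS: "P \<in> carrier S" unfolding P_def by (rule Sc.finprod_closed) (simp add: kappa_carrier)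
  have bS: "b (Suc n) \<in> carrier R" using Suc.prems by (simp add: hinv_def)
  have bR: "b \<in> {..<Suc n} \<rightarrow> carrier R" using Suc.prems by (simp add: hinv_def)
  have IH: "scal (int (card H) ^ n) (\<iota> P) = finprod R b {..<Suc n}"
    unfolding P_def using Suc.IH Suc.prems by simp
  have e1: "finprod S (\<lambda>i. \<kappa> (b i)) {..<Suc (Suc n)} = \<kappa> (b (Suc n)) \<otimes>\<^bsub>S\<^esub> P"
    unfolding P_def lessThan_Suc[of "Suc n"] by (rule Sc.finprod_insert) (simp_all add: kappa_carrier)
  have e2: "finprod R b {..<Suc (Suc n)} = b (Suc n) \<otimes>\<^bsub>R\<^esub> finprod R b {..<Suc n}"
    unfolding lessThan_Suc[of "Suc n"] by (rule Rc.finprod_insert) (use bR bS in auto)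
  have "scal (int (card H) ^ Suc n) (\<iota> (\<kappa> (b (Suc n)) \<otimes>\<^bsub>S\<^esub> P))
      = scal (int (card H) ^ n) (\<iota> (\<kappa> (b (Suc n))) \<otimes>\<^bsub>R\<^esub> \<iota> P)"
    by (simp add: iota_mult kappa_carrier PS scal_scal mult.commute)
  also have "\<dots> = b (Suc n) \<otimes>\<^bsub>R\<^esub> scal (int (card H) ^ n) (\<iota> P)"
    using Suc.prems by (simp add: iota_kappa scal_mult_right)
  finally show ?case using IH e1 e2 by simp
qed

lemma det_iota:
  assumes a: "\<And>i j. i < s \<Longrightarrow> j < s \<Longrightarrow> hinv G H (a i j)" and s: "s \<ge> 1"
  shows "scal (int (card H) ^ (s - 1)) (\<iota> (ring_det S s (\<lambda>i j. \<kappa> (a i j)))) = ring_det R s a"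
proof -
  obtain n where n: "s = Suc n" using s by (cases s) auto
  have aR: "a i j \<in> carrier R" if "i < s" "j < s" for i j using a[OF that] by (simp add: hinv_def)
  have pr: "scal (int (card H) ^ n) (\<iota> (finprod S (\<lambda>i. \<kappa> (a i (\<sigma> i))) {..<s})) = finprod R (\<lambda>i. a i (\<sigma> i)) {..<s}"
    if \<sigma>: "\<sigma> permutes {..<s}" for \<sigma>
    unfolding n by (rule prod_iota) (use a \<sigma> permutes_in_image[OF \<sigma>] n in auto)
  have dR: "ring_det R s a = (\<lambda>x. \<Sum>\<sigma>\<in>{\<sigma>. \<sigma> permutes {..<s}}. sign \<sigma> * finprod R (\<lambda>i. a i (\<sigma> i)) {..<s} x)"
    by (rule gr_det[OF R_cring aR])
  have dS: "ring_det S s (\<lambda>i j. \<kappa> (a i j)) = (\<lambda>x. \<Sum>\<sigma>\<in>{\<sigma>. \<sigma> permutes {..<s}}. sign \<sigma> * finprod S (\<lambda>i. \<kappa> (a i (\<sigma> i))) {..<s} x)"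
    by (rule gr_det[OF S_cring kappa_carrier])
  have pw: "scal (int (card H) ^ (s - 1)) (\<iota> (ring_det S s (\<lambda>i j. \<kappa> (a i j)))) x = ring_det R s a x" for x
  proof (cases "x \<in> carrier G")
    case True
    have "(\<Sum>\<sigma>\<in>{\<sigma>. \<sigma> permutes {..<s}}. sign \<sigma> * finprod R (\<lambda>i. a i (\<sigma> i)) {..<s} x)
       = (\<Sum>\<sigma>\<in>{\<sigma>. \<sigma> permutes {..<s}}. sign \<sigma> * scal (int (card H) ^ n) (\<iota> (finprod S (\<lambda>i. \<kappa> (a i (\<sigma> i))) {..<s})) x)"
      by (rule sum.cong) (simp_all add: pr)
    then show ?thesis unfolding dR dS
      using True n by (simp add: scal_def iota_def sum_distrib_left mult.left_commute)
  next
    case False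
    have "finprod R (\<lambda>i. a i (\<sigma> i)) {..<s} x = 0" if \<sigma>: "\<sigma> permutes {..<s}" for \<sigma>
    proof -
      interpret Rc: cring R by (rule R_cring)
      have "finprod R (\<lambda>i. a i (\<sigma> i)) {..<s} \<in> carrier R"
        by (rule Rc.finprod_closed) (use aR permutes_in_image[OF \<sigma>] in auto)
      then show ?thesis using False by (simp add: gr_carrier)
    qed
    then show ?thesis unfolding dR dS
      using False by (simp add: scal_def iota_def)
  qed
  show ?thesis by (rule ext) (rule pw)
qed

end

lemma det_cong:
  assumes R: "cring R" and eq: "\<And>i j. i < s \<Longrightarrow> j < s \<Longrightarrow> m i j = m' i j"
    and c: "\<And>i j. i < s \<Longrightarrow> j < s \<Longrightarrow> m' i j \<in> carrier R"
  shows "ring_det R s m = ring_det R s m'"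
proof -
  interpret cring R by (rule R)
  have fp: "finprod R (\<lambda>i. m i (\<sigma> i)) {..<s} = finprod R (\<lambda>i. m' i (\<sigma> i)) {..<s}"
    and fc: "finprod R (\<lambda>i. m' i (\<sigma> i)) {..<s} \<in> carrier R"
    if \<sigma>: "\<sigma> permutes {..<s}" for \<sigma>
  proof -
    have pi: "(\<lambda>i. m' i (\<sigma> i)) \<in> {..<s} \<rightarrow> carrier R" using c permutes_in_image[OF \<sigma>] by auto
    show "finprod R (\<lambda>i. m i (\<sigma> i)) {..<s} = finprod R (\<lambda>i. m' i (\<sigma> i)) {..<s}"
      by (rule finprod_cong'[OF refl pi]) (use eq permutes_in_image[OF \<sigma>] in auto)
    show "finprod R (\<lambda>i. m' i (\<sigma> i)) {..<s} \<in> carrier R" by (rule finprod_closed[OF pi])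
  qed
  show ?thesis unfolding ring_det_def
    by (rule finsum_cong'[OF refl]) (auto simp: fp fc)
qed

context msetup begin

lemma main:
  "\<exists>\<Phi>.
     module_iso S (ext_bidual S Y s) (invariants G H (ext_bidual R M s)) \<Phi> \<and>
     (s = 0 \<longrightarrow> \<Phi> (wedge_to_bidual S Y []) = N \<odot>\<^bsub>ext_bidual R M 0\<^esub> wedge_to_bidual R M []) \<and>
     (s \<ge> 1 \<longrightarrow> (\<forall>xs. length xs = s \<and> set xs \<subseteq> carrier (invariants G H M) \<longrightarrow>
        [(card H ^ (s - 1))] \<cdot>\<^bsub>ext_bidual R M s\<^esub> \<Phi> (wedge_to_bidual S Y (map ev xs))
        = wedge_to_bidual R M xs))"
proof (intro exI conjI impI allI)
  show "module_iso S (ext_bidual S Y s) (invariants G H (ext_bidual R M s)) (Phi s)"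
    unfolding ext_bidual_def by (rule Phi_iso)
next
  assume s0: "s = 0"
  interpret Rc: cring R by (rule R_cring)
  interpret Sc: cring S by (rule S_cring)
  have d0: "ring_det A 0 m = \<one>\<^bsub>A\<^esub>" if A: "cring A" for A :: "('x, 'y) ring_scheme" and m
  proof -
    interpret cring A by (rule A)
    show ?thesis by (simp add: ring_det_def)
  qed
  show "Phi s (wedge_to_bidual S Y []) = N \<odot>\<^bsub>ext_bidual R M 0\<^esub> wedge_to_bidual R M []"
    unfolding s0 ext_bidual_def Phi_def ad_smult wedge_to_bidual_def
    by (rule restrict_ext) (auto simp: tuples_def d0[OF R_cring] d0[OF S_cring] iota_one N_carrier)
next
  fix xs assume s1: "s \<ge> 1" and xs: "length xs = s \<and> set xs \<subseteq> carrier (invariants G H M)"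
  have xi: "xs ! j \<in> carrier (invariants G H M)" if "j < s" for j using xs that by auto
  have lmap: "length (map ev xs) = s" using xs by simp
  show "[(card H ^ (s - 1))] \<cdot>\<^bsub>ext_bidual R M s\<^esub> Phi s (wedge_to_bidual S Y (map ev xs)) = wedge_to_bidual R M xs"
    unfolding ext_bidual_def ad_nat_pow
  proof -
    have "(\<lambda>\<phi>s\<in>tuples MD s. scal (int (card H ^ (s - 1))) (Phi s (wedge_to_bidual S Y (map ev xs)) \<phi>s))
       = wedge_to_bidual R M xs"
      unfolding wedge_to_bidual_def xs[THEN conjunct1] lmap
    proof (rule restrict_ext)
      fix \<phi>s assume p: "\<phi>s \<in> tuples MD s"
      have ma: "map alpha \<phi>s \<in> tuples YD s" by (rule map_alpha_T[OF p])
      have lp: "length \<phi>s = s" using p by (simp add: tuples_len)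
      define a where "a i j = (\<phi>s ! i) (xs ! j)" for i j
      have ha: "hinv G H (a i j)" if "i < s" "j < s" for i j
        using Y_pt[OF ev_Y[OF xi[OF that(2)]] tuples_nth[OF p that(1)]] tuples_nth[OF p that(1)]
        by (simp add: a_def ev_app)
      have ent: "(map alpha \<phi>s ! i) (map ev xs ! j) = \<kappa> (a i j)" if "i < s" "j < s" for i j
        using that lp xs ev_Y[OF xi[OF that(2)]] tuples_nth[OF p that(1)]
        by (simp add: alpha_def a_def ev_app)
      have "ring_det S s (\<lambda>i j. (map alpha \<phi>s ! i) (map ev xs ! j)) = ring_det S s (\<lambda>i j. \<kappa> (a i j))"
        by (rule det_cong[OF S_cring]) (simp_all add: ent kappa_carrier)
      then have "scal (int (card H ^ (s - 1))) (Phi s (\<lambda>\<phi>s\<in>tuples YD s. ring_det S s (\<lambda>i j. (\<phi>s ! i) (map ev xs ! j))) \<phi>s)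
          = scal (int (card H) ^ (s - 1)) (\<iota> (ring_det S s (\<lambda>i j. \<kappa> (a i j))))"
        using p ma by (simp add: Phi_def)
      also have "\<dots> = ring_det R s a" by (rule det_iota[OF ha s1])
      finally have fin: "scal (int (card H ^ (s - 1))) (Phi s (\<lambda>\<phi>s\<in>tuples YD s. ring_det S s (\<lambda>i j. (\<phi>s ! i) (map ev xs ! j))) \<phi>s)
          = ring_det R s a" .
      have "a = (\<lambda>i j. (\<phi>s ! i) (xs ! j))" by (intro ext) (simp add: a_def)
      then show "scal (int (card H ^ (s - 1))) (Phi s (\<lambda>\<phi>s\<in>tuples YD s. ring_det S s (\<lambda>i j. (\<phi>s ! i) (map ev xs ! j))) \<phi>s)
          = ring_det R s (\<lambda>i j. (\<phi>s ! i) (xs ! j))" using fin by simp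
    qed
    then show "(\<lambda>\<phi>s\<in>tuples MD s. scal (int (card H ^ (s - 1))) (Phi s (wedge_to_bidual S Y (map ev xs)) \<phi>s))
       = wedge_to_bidual R M xs" .
  qed
qed

end

theorem mainTheorem7:
  fixes G :: "('g, 'z) monoid_scheme" and H :: "'g set"
    and M :: "('g \<Rightarrow> int, 'm) module" and s :: nat
  assumes "comm_group G" and "finite (carrier G)" and "subgroup H G"
    and "module (group_ring G) M" and "fin_gen (group_ring G) M"
  shows "\<exists>\<Phi>.
     module_iso (group_ring (G Mod H))
       (ext_bidual (group_ring (G Mod H))
          (invariants G H (dual (group_ring G) (dual (group_ring G) M))) s)
       (invariants G H (ext_bidual (group_ring G) M s)) \<Phi> \<and>
     (s = 0 \<longrightarrow>
        \<Phi> (wedge_to_bidual (group_ring (G Mod H))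
              (invariants G H (dual (group_ring G) (dual (group_ring G) M))) [])
        = norm_elem G H \<odot>\<^bsub>ext_bidual (group_ring G) M 0\<^esub>
            wedge_to_bidual (group_ring G) M []) \<and>
     (s \<ge> 1 \<longrightarrow> (\<forall>xs. length xs = s \<and> set xs \<subseteq> carrier (invariants G H M) \<longrightarrow>
        [(card H ^ (s - 1))] \<cdot>\<^bsub>ext_bidual (group_ring G) M s\<^esub>
          \<Phi> (wedge_to_bidual (group_ring (G Mod H))
                (invariants G H (dual (group_ring G) (dual (group_ring G) M)))
                (map (eval_bidual (group_ring G) M) xs))
        = wedge_to_bidual (group_ring G) M xs))"
proof -
  interpret msetup G H M
    using assms by (simp add: msetup_def gsetup_def gsetup_axioms_def msetup_axioms_def)
  show ?thesis by (rule main)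
qed

end
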